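(* Let $f\in\mathcal{C}^{2r}(-b,b)$ ($b>0$, $r\ge1$ integer) with $f^{(2\ell-1)}(0)=0$ for $1\le\ell<r$ and $f^{(2r-1)}(0)\neq0$; write $f_k=f^{(k)}(0)/k!$. Let $x_1,\ldots,x_n\in\mathbb{R}$ with $r\le n$, and $\mathbf{K}_\varepsilon=[f(\varepsilon|x_i-x_j|)]_{i,j=1}^n$. Assume that for some $\varepsilon_0>0$, $\mathbf{K}_\varepsilon$ is positive semidefinite for $\varepsilon\in[0,\varepsilon_0]$, and that $\varepsilon\mapsto\mathbf{K}_\varepsilon$ is analytic near $0$. Let $\lambda_1(\varepsilon)\ge\cdots\ge\lambda_n(\varepsilon)$ be its eigenvalues for small $\varepsilon>0$, written $\lambda_s(\varepsilon)=\varepsilon^{2(s-1)}(\widetilde\lambda_s+\mathcal{O}(\varepsilon))$ for $s\le r$ and $\lambda_s(\varepsilon)=\varepsilon^{2r-1}(\widetilde\lambda_s+\mathcal{O}(\varepsilon))$ for $s>r$, and let $\mathbf{p}_1,\ldots,\mathbf{p}_n$ be the corresponding limiting eigenvectors. Then: 1. For $1\le s\le r$, $\widetilde\lambda_1\cdots\widetilde\lambda_s=\det(\mathbf{V}_{\le s-1}^\top\mathbf{V}_{\le s-1})\det(\mathbf{W}_{s-1})$. In particular, if $1<s\le r$ and $\det\mathbf{W}_{s-2}\neq0$, then \[\widetilde\lambda_s=\frac{\det(\mathbf{V}_{\le s-1}^\top\mathbf{V}_{\le s-1})}{\det(\mathbf{V}_{\le s-2}^\top\mathbf{V}_{\le s-2})}\cdot\frac{\det\mathbf{W}_{s-1}}{\det\mathbf{W}_{s-2}}.\]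 2. If the points $x_i$ are distinct and, for $1\le s\le r$, $\det\mathbf{W}_{s-1}\neq0$, then $\mathbf{p}_1,\ldots,\mathbf{p}_s$ are (up to sign) the first $s$ columns of the orthogonal factor $\mathbf{Q}_{\rm full}$ of a full QR factorization of $\mathbf{V}_{\le s-1}$. In particular, if $\det\mathbf{W}_{r-1}\neq0$, the last $n-r$ limiting eigenvectors $\mathbf{p}_{r+1},\ldots,\mathbf{p}_n$ span the column space of $\mathbf{Q}_\perp$. 3. If $\det\mathbf{W}_{r-1}\neq0$ and the points $x_i$ are distinct, then $\widetilde\lambda_{r+1},\ldots,\widetilde\lambda_n$ are the eigenvalues of $f_{2r-1}\mathbf{Q}_\perp^\top\mathbf{D}_{(2r-1)}\mathbf{Q}_\perp$. Here $\mathbf{Q}_\perp\in\mathbb{R}^{n\times(n-r)}$ consists of the last $n-r$ columns of the orthogonal factor of a full QR factorization of $\mathbf{V}_{\le r-1}$.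
   Context: Vandermonde: $\mathbf{V}_{\le k}=[x_i^{j}]_{1\le i\le n,\,0\le j\le k}$. Distance powers: $\mathbf{D}_{(k)}=[|x_i-x_j|^k]_{i,j=1}^n$. Wronskian: $\mathbf{W}_{k}$ is the $(k+1)\times(k+1)$ matrix with $(i,j)$ entry $\frac{K^{(i,j)}(0,0)}{i!j!}=(-1)^j\binom{i+j}{j}f_{i+j}$, $0\le i,j\le k$, where $K(x,y)=f(|x-y|)$. Full QR factorization of $\mathbf{V}\in\mathbb{R}^{n\times m}$: $\mathbf{V}=\mathbf{Q}_{\rm full}\begin{bmatrix}\mathbf{R}\\\mathbf{0}\end{bmatrix}$ with $\mathbf{Q}_{\rm full}$ orthogonal $n\times n$ and $\mathbf{R}$ upper triangular. Limiting eigenvectors: for a matrix function analytic in $\varepsilon$ and symmetric for real $\varepsilon$, eigenvalues $\lambda_k(\varepsilon)$ and orthogonal rank-one eigenprojectors $\mathbf{P}_k(\varepsilon)$ can be chosen analytic near $0$; the limiting eigenvector $\mathbf{p}_k$ is a unit vector with $\mathbf{P}_k(0)=\mathbf{p}_k\mathbf{p}_k^\top$ (up to sign). *)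

theory Defs
  imports Complex_Main "HOL-Analysis.Derivative" "Jordan_Normal_Form.Matrix" "Jordan_Normal_Form.Determinant"
    "Jordan_Normal_Form.Char_Poly"
begin

definition C_k_on :: "nat \<Rightarrow> (real \<Rightarrow> real) \<Rightarrow> real set \<Rightarrow> bool" where
  "C_k_on k f S \<longleftrightarrow>
     (\<forall>j<k. \<forall>t\<in>S. (deriv ^^ j) f differentiable (at t)) \<and> continuous_on S ((deriv ^^ k) f)"

definition tcoef :: "(real \<Rightarrow> real) \<Rightarrow> nat \<Rightarrow> real" where
  "tcoef f k = (deriv ^^ k) f 0 / fact k"

definition real_analytic_near0 :: "(real \<Rightarrow> real) \<Rightarrow> bool" where
  "real_analytic_near0 g \<longleftrightarrow>
     (\<exists>c \<delta>. \<delta> > 0 \<and> (\<forall>t. \<bar>t\<bar> < \<delta> \<longrightarrow> (\<lambda>k. c k * t ^ k) sums g t))"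

definition mat_analytic_near0 :: "nat \<Rightarrow> (real \<Rightarrow> real mat) \<Rightarrow> bool" where
  "mat_analytic_near0 n M \<longleftrightarrow>
     (\<forall>t. M t \<in> carrier_mat n n) \<and>
     (\<forall>i<n. \<forall>j<n. real_analytic_near0 (\<lambda>t. M t $$ (i,j)))"

text \<open>Kernel matrix K_eps = [f(eps |x_i - x_j|)], points indexed 0..n-1.\<close>
definition Kmat :: "(real \<Rightarrow> real) \<Rightarrow> nat \<Rightarrow> (nat \<Rightarrow> real) \<Rightarrow> real \<Rightarrow> real mat" where
  "Kmat f n x \<epsilon> = Matrix.mat n n (\<lambda>(i,j). f (\<epsilon> * \<bar>x i - x j\<bar>))"

definition Vand :: "nat \<Rightarrow> (nat \<Rightarrow> real) \<Rightarrow> nat \<Rightarrow> real mat" where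
  "Vand n x k = Matrix.mat n (k+1) (\<lambda>(i,j). x i ^ j)"

definition Dpow :: "nat \<Rightarrow> (nat \<Rightarrow> real) \<Rightarrow> nat \<Rightarrow> real mat" where
  "Dpow n x k = Matrix.mat n n (\<lambda>(i,j). \<bar>x i - x j\<bar> ^ k)"

definition Wron :: "(real \<Rightarrow> real) \<Rightarrow> nat \<Rightarrow> real mat" where
  "Wron f k = Matrix.mat (k+1) (k+1) (\<lambda>(i,j). (-1) ^ j * real ((i+j) choose j) * tcoef f (i+j))"

definition psd_mat :: "nat \<Rightarrow> real mat \<Rightarrow> bool" where
  "psd_mat n A \<longleftrightarrow> A \<in> carrier_mat n n \<and> transpose_mat A = A \<and>
     (\<forall>v\<in>carrier_vec n. scalar_prod v (A *\<^sub>v v) \<ge> 0)"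

definition outer :: "nat \<Rightarrow> real Matrix.vec \<Rightarrow> real mat" where
  "outer n v = Matrix.mat n n (\<lambda>(i,j). vec_index v i * vec_index v j)"

definition full_QR :: "real mat \<Rightarrow> real mat \<Rightarrow> bool" where
  "full_QR V Q \<longleftrightarrow> (let n = dim_row V; m = dim_col V in
     Q \<in> carrier_mat n n \<and> transpose_mat Q * Q = 1\<^sub>m n \<and>
     (\<exists>R. R \<in> carrier_mat m m \<and> upper_triangular R \<and>
          V = Q * Matrix.mat n m (\<lambda>(i,j). if i < m then R $$ (i,j) else 0)))"

definition last_cols :: "nat \<Rightarrow> real mat \<Rightarrow> real mat" where
  "last_cols k Q = Matrix.mat (dim_row Q) (dim_col Q - k) (\<lambda>(i,j). Q $$ (i, k + j))"

definition col_space :: "real mat \<Rightarrow> real Matrix.vec set" where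
  "col_space A = {A *\<^sub>v y | y. y \<in> carrier_vec (dim_col A)}"

text \<open>Order of the s-th eigenvalue (0-based s): 2s for s<r, 2r-1 otherwise.\<close>
definition eig_order :: "nat \<Rightarrow> nat \<Rightarrow> nat" where
  "eig_order r s = (if s < r then 2 * s else 2 * r - 1)"

end

theory Submission
  imports Defs
begin

lemma ra_limit0:
  assumes "real_analytic_near0 g"
  shows "(g \<longlongrightarrow> g 0) (at 0)"
proof -
  from assms obtain c \<delta> where d: "\<delta> > 0" and s: "\<And>t. \<bar>t\<bar> < \<delta> \<Longrightarrow> (\<lambda>k. c k * t ^ k) sums g t"
    unfolding real_analytic_near0_def by blast
  have "(g \<longlongrightarrow> c 0) (at 0)"
  proof (rule powser_limit_0[OF d])
    fix t :: real assume "norm t < \<delta>"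
    then show "(\<lambda>k. c k * t ^ k) sums g t" using s by simp
  qed
  moreover have "g 0 = c 0"
  proof -
    have "(\<lambda>k. c k * 0 ^ k) sums g 0" using s[of 0] d by simp
    then show ?thesis by simp
  qed
  ultimately show ?thesis by simp
qed

lemma ra_lin:
  assumes "real_analytic_near0 g" "real_analytic_near0 h"
  shows "real_analytic_near0 (\<lambda>t. a * g t + h t)"
proof -
  from assms(1) obtain c \<delta> where d: "\<delta> > 0" and s: "\<And>t. \<bar>t\<bar> < \<delta> \<Longrightarrow> (\<lambda>k. c k * t ^ k) sums g t"
    unfolding real_analytic_near0_def by blast
  from assms(2) obtain c' \<delta>' where d': "\<delta>' > 0" and s': "\<And>t. \<bar>t\<bar> < \<delta>' \<Longrightarrow> (\<lambda>k. c' k * t ^ k) sums h t"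
    unfolding real_analytic_near0_def by blast
  show ?thesis unfolding real_analytic_near0_def
  proof (intro exI conjI allI impI)
    show "min \<delta> \<delta>' > 0" using d d' by simp
    fix t :: real assume "\<bar>t\<bar> < min \<delta> \<delta>'"
    then have "(\<lambda>k. a * (c k * t ^ k) + c' k * t ^ k) sums (a * g t + h t)"
      by (intro sums_add sums_mult s s') auto
    then show "(\<lambda>k. (a * c k + c' k) * t ^ k) sums (a * g t + h t)"
      by (simp add: algebra_simps)
  qed
qed

lemma ra_zero: "real_analytic_near0 (\<lambda>t. 0)"
  unfolding real_analytic_near0_def
  by (rule exI[of _ "\<lambda>k. 0"], rule exI[of _ 1]) auto

lemma ra_sum:
  assumes "finite I" "\<And>i. i \<in> I \<Longrightarrow> real_analytic_near0 (g i)"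
  shows "real_analytic_near0 (\<lambda>t. \<Sum>i\<in>I. a i * g i t)"
  using assms
proof (induction I rule: finite_induct)
  case empty then show ?case using ra_zero by simp
next
  case (insert j I)
  have "real_analytic_near0 (\<lambda>t. a j * g j t + (\<Sum>i\<in>I. a i * g i t))"
    by (rule ra_lin) (use insert in auto)
  then show ?case using insert by simp
qed

lemma powser_shift_limit:
  fixes c :: "nat \<Rightarrow> real" and g :: "real \<Rightarrow> real"
  assumes d: "\<delta> > 0" and s: "\<And>t. \<bar>t\<bar> < \<delta> \<Longrightarrow> (\<lambda>j. c j * t ^ j) sums g t"
    and z: "\<And>j. j < k \<Longrightarrow> c j = 0"
  shows "((\<lambda>t. g t / t ^ k) \<longlongrightarrow> c k) (at 0)"
proof -
  have "((\<lambda>t. g t / t ^ k) \<longlongrightarrow> (\<lambda>j. c (j + k)) 0) (at 0)"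
  proof (rule powser_limit_0_strong[OF d])
    fix t :: real assume t: "t \<noteq> 0" "norm t < \<delta>"
    have "(\<lambda>j. c j * t ^ j) sums (g t)" using s t by auto
    then have "(\<lambda>j. c (j + k) * t ^ (j + k)) sums (g t - (\<Sum>i<k. c i * t ^ i))"
      by (subst sums_iff_shift) simp
    then have "(\<lambda>j. c (j + k) * t ^ (j + k)) sums (g t)" using z by simp
    then have "(\<lambda>j. c (j + k) * t ^ (j + k) / t ^ k) sums (g t / t ^ k)"
      by (rule sums_divide)
    moreover have "\<And>j. c (j + k) * t ^ (j + k) / t ^ k = c (j + k) * t ^ j"
      using t by (simp add: power_add)
    ultimately show "(\<lambda>j. c (j + k) * t ^ j) sums (g t / t ^ k)" by simp
  qed
  then show ?thesis by simp
qed

lemma at_right_le_at: "at_right (x::real) \<le> at x"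
  by (rule at_le) simp

lemma at_left_le_at: "at_left (x::real) \<le> at x"
  by (rule at_le) simp

lemma lim_at_right: "(g \<longlongrightarrow> l) (at (x::real)) \<Longrightarrow> (g \<longlongrightarrow> l) (at_right x)"
  by (rule tendsto_mono[OF at_right_le_at])

lemma lim_at_left: "(g \<longlongrightarrow> l) (at (x::real)) \<Longrightarrow> (g \<longlongrightarrow> l) (at_left x)"
  by (rule tendsto_mono[OF at_left_le_at])

lemma ra_parity:
  fixes g :: "real \<Rightarrow> real" and N :: nat
  assumes an: "real_analytic_near0 g"
    and nonneg: "\<rho> > 0" "\<And>t. \<bar>t\<bar> < \<rho> \<Longrightarrow> g t \<ge> 0"
    and oddN: "odd N"
    and bnd: "\<eta> > 0" "\<And>e. 0 < e \<Longrightarrow> e < \<eta> \<Longrightarrow> \<bar>g e\<bar> \<le> C * e ^ N"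
  shows "((\<lambda>e. g e / e ^ N) \<longlongrightarrow> 0) (at_right 0)"
proof -
  from an obtain c \<delta> where d: "\<delta> > 0" and s: "\<And>t. \<bar>t\<bar> < \<delta> \<Longrightarrow> (\<lambda>k. c k * t ^ k) sums g t"
    unfolding real_analytic_near0_def by blast
  have bd_right: "((\<lambda>e. g e / e ^ k) \<longlongrightarrow> 0) (at_right 0)" if "k < N" for k
  proof -
    have ev: "eventually (\<lambda>e. \<bar>g e / e ^ k\<bar> \<le> \<bar>C\<bar> * e ^ (N - k)) (at_right 0)"
    proof -
      have "eventually (\<lambda>e. 0 < e \<and> e < \<eta>) (at_right (0::real))"
        using eventually_at_right_real[OF bnd(1)] by simp
      then show ?thesis
      proof (rule eventually_mono)
        fix e :: real assume e: "0 < e \<and> e < \<eta>"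
        have "\<bar>g e / e ^ k\<bar> = \<bar>g e\<bar> / e ^ k" using e by (simp add: abs_divide)
        also have "\<dots> \<le> C * e ^ N / e ^ k"
          using bnd(2)[of e] e by (intro divide_right_mono) auto
        also have "C * e ^ N / e ^ k = C * e ^ (N - k)"
          using e \<open>k < N\<close> by (simp add: power_diff)
        also have "\<dots> \<le> \<bar>C\<bar> * e ^ (N - k)" using e by (intro mult_right_mono) auto
        finally show "\<bar>g e / e ^ k\<bar> \<le> \<bar>C\<bar> * e ^ (N - k)" .
      qed
    qed
    have "((\<lambda>e. \<bar>C\<bar> * e ^ (N - k)) \<longlongrightarrow> \<bar>C\<bar> * 0 ^ (N - k)) (at_right (0::real))"
      by (intro tendsto_intros)
    then have lim0: "((\<lambda>e. \<bar>C\<bar> * e ^ (N - k)) \<longlongrightarrow> 0) (at_right (0::real))"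
      using \<open>k < N\<close> by (simp add: power_0_left)
    show ?thesis
      by (rule tendsto_0_le[OF lim0, of _ 1]) (use ev in \<open>auto elim: eventually_mono\<close>)
  qed
  have cz: "c k = 0" if "k < N" for k
    using that
  proof (induction k rule: less_induct)
    case (less k)
    have "((\<lambda>t. g t / t ^ k) \<longlongrightarrow> c k) (at 0)"
      by (rule powser_shift_limit[OF d s]) (use less in auto)
    then have "((\<lambda>t. g t / t ^ k) \<longlongrightarrow> c k) (at_right 0)"
      by (rule lim_at_right)
    moreover have "((\<lambda>t. g t / t ^ k) \<longlongrightarrow> 0) (at_right 0)" using bd_right less by auto
    ultimately show ?case using tendsto_unique[OF trivial_limit_at_right_real] by blast
  qed
  have limN: "((\<lambda>t. g t / t ^ N) \<longlongrightarrow> c N) (at 0)"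
    by (rule powser_shift_limit[OF d s]) (use cz in auto)
  have "((\<lambda>t. g t / t ^ N) \<longlongrightarrow> c N) (at_right 0)"
    using limN by (rule lim_at_right)
  moreover have "((\<lambda>t. g t / t ^ N) \<longlongrightarrow> c N) (at_left 0)"
    using limN by (rule lim_at_left)
  moreover have "eventually (\<lambda>t. g t / t ^ N \<ge> 0) (at_right (0::real))"
  proof -
    have "eventually (\<lambda>t. 0 < t \<and> t < \<rho>) (at_right (0::real))"
      using eventually_at_right_real[OF nonneg(1)] by simp
    then show ?thesis
      by (rule eventually_mono) (use nonneg(2) in auto)
  qed
  moreover have "eventually (\<lambda>t. g t / t ^ N \<le> 0) (at_left (0::real))"
  proof -
    have "eventually (\<lambda>t. - \<rho> < t \<and> t < 0) (at_left (0::real))"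
      using eventually_at_left_real[of "- \<rho>" 0] nonneg(1) by simp
    then show ?thesis
    proof (rule eventually_mono)
      fix t :: real assume t: "- \<rho> < t \<and> t < 0"
      have "g t \<ge> 0" using nonneg(2) t by auto
      moreover have "t ^ N < 0" using t oddN by (simp add: odd_pos power_less_zero_eq)
      ultimately show "g t / t ^ N \<le> 0" by (simp add: divide_nonneg_neg)
    qed
  qed
  ultimately have "c N \<ge> 0" "c N \<le> 0"
    by (auto intro: tendsto_lowerbound tendsto_upperbound)
  then have "c N = 0" by simp
  with \<open>((\<lambda>t. g t / t ^ N) \<longlongrightarrow> c N) (at_right 0)\<close> show ?thesis by simp
qed


lemma Ck_deriv:
  assumes sm: "C_k_on K f S" and "open S" and m: "m < K" and t: "t \<in> S"
  shows "((deriv ^^ m) f has_real_derivative (deriv ^^ Suc m) f t) (at t)"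
proof -
  have "(deriv ^^ m) f differentiable (at t)" using sm m t unfolding C_k_on_def by blast
  then have "((deriv ^^ m) f has_real_derivative deriv ((deriv ^^ m) f) t) (at t)"
    using DERIV_deriv_iff_real_differentiable by blast
  then show ?thesis by simp
qed

lemma Ck_cont:
  assumes sm: "C_k_on K f S" and m: "m < K" and t: "t \<in> S"
  shows "isCont ((deriv ^^ m) f) t"
proof -
  have "(deriv ^^ m) f differentiable (at t)" using sm m t unfolding C_k_on_def by blast
  then show ?thesis by (rule differentiable_imp_continuous_within)
qed

lemma taylor_peano:
  fixes f :: "real \<Rightarrow> real"
  assumes b: "b > 0" and sm: "C_k_on K f {-b<..<b}" and N: "N < K"
  shows "((\<lambda>t. (f t - (\<Sum>m\<le>N. tcoef f m * t ^ m)) / t ^ N) \<longlongrightarrow> 0) (at 0)"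
proof -
  let ?D = "\<lambda>m. (deriv ^^ m) f"
  have der: "\<And>m t. m < K \<Longrightarrow> \<bar>t\<bar> < b \<Longrightarrow> (?D m has_real_derivative ?D (Suc m) t) (at t)"
    by (rule Ck_deriv[OF sm]) auto
  have cont: "isCont (?D N) 0" by (rule Ck_cont[OF sm N]) (use b in auto)
  then have lim: "(?D N \<midarrow>0\<rightarrow> ?D N 0)" by (simp add: isCont_def)
  show ?thesis unfolding LIM_eq
  proof (intro allI impI)
    fix r :: real assume r: "r > 0"
    then have "r * fact N > 0" by simp
    with lim obtain s where s: "s > 0"
      and hs: "\<And>x. x \<noteq> 0 \<and> norm (x - 0) < s \<Longrightarrow> norm (?D N x - ?D N 0) < r * fact N"
      unfolding LIM_eq by blast
    show "\<exists>s>0. \<forall>x. x \<noteq> 0 \<and> norm (x - 0) < s \<longrightarrow>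
          norm ((f x - (\<Sum>m\<le>N. tcoef f m * x ^ m)) / x ^ N - 0) < r"
    proof (intro exI[of _ "min s b"] conjI allI impI)
      show "min s b > 0" using s b by simp
      fix x :: real assume x: "x \<noteq> 0 \<and> norm (x - 0) < min s b"
      have "\<forall>m t. m < N \<and> \<bar>t\<bar> \<le> \<bar>x\<bar> \<longrightarrow> (?D m has_real_derivative ?D (Suc m) t) (at t)"
        using der N x by auto
      from Maclaurin_bi_le[of ?D f N, OF _ this] obtain \<xi> where
        xi: "\<bar>\<xi>\<bar> \<le> \<bar>x\<bar>" and
        fx: "f x = (\<Sum>m<N. ?D m 0 / fact m * x ^ m) + ?D N \<xi> / fact N * x ^ N"
        by auto
      have sumN: "(\<Sum>m\<le>N. tcoef f m * x ^ m) = (\<Sum>m<N. ?D m 0 / fact m * x ^ m) + ?D N 0 / fact N * x ^ N"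
        by (simp add: lessThan_Suc_atMost[symmetric] tcoef_def)
      have xN: "x ^ N \<noteq> 0" using x by simp
      have eq: "(f x - (\<Sum>m\<le>N. tcoef f m * x ^ m)) / x ^ N = (?D N \<xi> - ?D N 0) / fact N"
        unfolding fx sumN using xN by (simp add: field_simps)
      have "norm (?D N \<xi> - ?D N 0) < r * fact N"
      proof (cases "\<xi> = 0")
        case True then show ?thesis using \<open>r * fact N > 0\<close> by simp
      next
        case False then show ?thesis using hs[of \<xi>] xi x by auto
      qed
      then show "norm ((f x - (\<Sum>m\<le>N. tcoef f m * x ^ m)) / x ^ N - 0) < r"
        unfolding eq by (simp add: pos_divide_less_eq)
    qed
  qed
qed

lemma taylor_scaled:
  fixes f :: "real \<Rightarrow> real"
  assumes b: "b > 0" and sm: "C_k_on K f {-b<..<b}" and N: "N < K" and d: "d \<ge> 0"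
  shows "((\<lambda>e. (f (e * d) - (\<Sum>m\<le>N. tcoef f m * e ^ m * d ^ m)) / e ^ N) \<longlongrightarrow> 0) (at_right 0)"
proof (cases "d = 0")
  case True
  have "\<And>e. (\<Sum>m\<le>N. tcoef f m * e ^ m * 0 ^ m) = f 0"
    by (simp add: tcoef_def power_0_left sum.atMost_shift)
  then show ?thesis using True by simp
next
  case False
  then have dp: "d > 0" using d by simp
  let ?h = "\<lambda>t. (f t - (\<Sum>m\<le>N. tcoef f m * t ^ m)) / t ^ N"
  have lim: "(?h \<longlongrightarrow> 0) (at 0)" by (rule taylor_peano[OF b sm N])
  have lin: "filterlim (\<lambda>e. e * d) (at 0) (at_right 0)"
  proof -
    have "((\<lambda>e. e * d) \<longlongrightarrow> 0 * d) (at_right (0::real))" by (intro tendsto_intros)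
    moreover have "eventually (\<lambda>e. e * d \<noteq> 0) (at_right (0::real))"
      using eventually_at_right_less[of "0::real"] by (rule eventually_mono) (use dp in auto)
    ultimately show ?thesis by (simp add: filterlim_at tendsto_eventually)
  qed
  have "((\<lambda>e. ?h (e * d)) \<longlongrightarrow> 0) (at_right 0)"
    by (rule filterlim_compose[OF lim lin])
  then have "((\<lambda>e. d ^ N * ?h (e * d)) \<longlongrightarrow> d ^ N * 0) (at_right 0)"
    by (intro tendsto_intros)
  moreover have "eventually (\<lambda>e. d ^ N * ?h (e * d) =
      (f (e * d) - (\<Sum>m\<le>N. tcoef f m * e ^ m * d ^ m)) / e ^ N) (at_right (0::real))"
    using eventually_at_right_less[of "0::real"]
  proof (rule eventually_mono)
    fix e :: real assume e: "0 < e"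
    show "d ^ N * ?h (e * d) = (f (e * d) - (\<Sum>m\<le>N. tcoef f m * e ^ m * d ^ m)) / e ^ N"
      using e dp by (simp add: power_mult_distrib field_simps)
  qed
  ultimately show ?thesis by (simp add: tendsto_cong)
qed

lemma sum_delta_right:
  fixes g e :: "nat \<Rightarrow> 'a::semiring_0"
  assumes "j < s"
  shows "(\<Sum>k<s. g k * (if k = j then e k else 0)) = g j * e j"
proof -
  have "\<And>k. g k * (if k = j then e k else 0) = (if k = j then g j * e j else 0)" by simp
  then show ?thesis using assms by (simp add: sum.delta')
qed

lemma sum_delta_left:
  fixes g c :: "nat \<Rightarrow> 'a::semiring_0"
  assumes "i < s"
  shows "(\<Sum>t<s. (if i = t then c i else 0) * g t) = c i * g i"
proof -
  have "\<And>t. (if i = t then c i else 0) * g t = (if i = t then c i * g i else 0)" by simp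
  then show ?thesis using assms by (simp add: sum.delta)
qed

lemma det_diag_fun:
  "det (Matrix.mat s s (\<lambda>(i,j). if i = j then d i else (0::'a::comm_ring_1))) = (\<Prod>i<s. d i)"
proof -
  have ut: "upper_triangular (Matrix.mat s s (\<lambda>(i,j). if i = j then d i else (0::'a)))"
    unfolding upper_triangular_def by auto
  have "det (Matrix.mat s s (\<lambda>(i,j). if i = j then d i else (0::'a))) =
        prod_list (diag_mat (Matrix.mat s s (\<lambda>(i,j). if i = j then d i else (0::'a))))"
    by (rule det_upper_triangular[OF ut]) auto
  also have "\<dots> = (\<Prod>i = 0..<s. d i)" unfolding prod_list_diag_prod by simp
  finally show ?thesis by (simp add: atLeast0LessThan)
qed

lemma det_gram_diag:
  fixes M :: "nat \<Rightarrow> nat \<Rightarrow> 'a::comm_ring_1"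
  shows "det (Matrix.mat s s (\<lambda>(a,b). \<Sum>t<s. M a t * d t * M b t)) =
         det (Matrix.mat s s (\<lambda>(a,t). M a t)) ^ 2 * (\<Prod>t<s. d t)"
proof -
  let ?M = "Matrix.mat s s (\<lambda>(a,t). M a t)"
  let ?D = "Matrix.mat s s (\<lambda>(i,j). if i = j then d i else (0::'a))"
  have eq: "Matrix.mat s s (\<lambda>(a,b). \<Sum>t<s. M a t * d t * M b t) = ?M * ?D * transpose_mat ?M"
  proof (rule eq_matI)
    fix i j assume ij: "i < dim_row (?M * ?D * transpose_mat ?M)" "j < dim_col (?M * ?D * transpose_mat ?M)"
    then have i: "i < s" and j: "j < s" by auto
    have "(?M * ?D * transpose_mat ?M) $$ (i,j) = (\<Sum>k<s. (\<Sum>t<s. M i t * (if t = k then d t else 0)) * M j k)"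
      using i j by (simp add: scalar_prod_def atLeast0LessThan)
    also have "\<dots> = (\<Sum>k<s. M i k * d k * M j k)"
      by (rule sum.cong) (auto simp: if_distrib sum.delta cong: if_cong)
    finally show "Matrix.mat s s (\<lambda>(a,b). \<Sum>t<s. M a t * d t * M b t) $$ (i,j) = (?M * ?D * transpose_mat ?M) $$ (i,j)"
      using i j by simp
  qed auto
  have c: "?M \<in> carrier_mat s s" "?D \<in> carrier_mat s s" "transpose_mat ?M \<in> carrier_mat s s" by auto
  have "det (?M * ?D * transpose_mat ?M) = det ?M * det ?D * det (transpose_mat ?M)"
    using det_mult[OF mult_carrier_mat[OF c(1) c(2)] c(3)] det_mult[OF c(1) c(2)] by simp
  also have "\<dots> = det ?M ^ 2 * (\<Prod>t<s. d t)"
    using c by (simp add: det_transpose[OF c(1)] det_diag_fun power2_eq_square)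
  finally show ?thesis using eq by simp
qed

lemma det_scale_rows_cols:
  fixes M :: "nat \<Rightarrow> nat \<Rightarrow> 'a::comm_ring_1"
  shows "det (Matrix.mat s s (\<lambda>(a,t). c a * M a t * e t)) =
         (\<Prod>a<s. c a) * (\<Prod>t<s. e t) * det (Matrix.mat s s (\<lambda>(a,t). M a t))"
proof -
  let ?M = "Matrix.mat s s (\<lambda>(a,t). M a t)"
  let ?C = "Matrix.mat s s (\<lambda>(i,j). if i = j then c i else (0::'a))"
  let ?E = "Matrix.mat s s (\<lambda>(i,j). if i = j then e i else (0::'a))"
  have eq: "Matrix.mat s s (\<lambda>(a,t). c a * M a t * e t) = ?C * ?M * ?E"
  proof (rule eq_matI)
    fix i j assume ij: "i < dim_row (?C * ?M * ?E)" "j < dim_col (?C * ?M * ?E)"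
    then have i: "i < s" and j: "j < s" by auto
    have "(?C * ?M * ?E) $$ (i,j) = (\<Sum>k<s. (\<Sum>t<s. (if i = t then c i else 0) * M t k) * (if k = j then e k else 0))"
      using i j by (simp add: scalar_prod_def atLeast0LessThan)
    also have "\<dots> = (\<Sum>t<s. (if i = t then c i else 0) * M t j) * e j"
      using j by (rule sum_delta_right)
    also have "\<dots> = c i * M i j * e j"
      using sum_delta_left[OF i, of c "\<lambda>t. M t j"] by simp
    finally have X: "(?C * ?M * ?E) $$ (i,j) = c i * M i j * e j" .
    show "Matrix.mat s s (\<lambda>(a,t). c a * M a t * e t) $$ (i,j) = (?C * ?M * ?E) $$ (i,j)"
      unfolding X using i j by simp
  qed auto
  have c: "?M \<in> carrier_mat s s" "?C \<in> carrier_mat s s" "?E \<in> carrier_mat s s" by auto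
  have "det (?C * ?M * ?E) = det ?C * det ?M * det ?E"
    using det_mult[OF mult_carrier_mat[OF c(2) c(1)] c(3)] det_mult[OF c(2) c(1)] by simp
  then show ?thesis using eq by (simp add: det_diag_fun)
qed

lemma det_tendsto:
  fixes F :: "'b \<Rightarrow> nat \<Rightarrow> nat \<Rightarrow> real"
  assumes "\<And>i j. i < s \<Longrightarrow> j < s \<Longrightarrow> ((\<lambda>e. F e i j) \<longlongrightarrow> L i j) G"
  shows "((\<lambda>e. det (Matrix.mat s s (\<lambda>(i,j). F e i j))) \<longlongrightarrow> det (Matrix.mat s s (\<lambda>(i,j). L i j))) G"
proof -
  have d: "\<And>H :: nat \<Rightarrow> nat \<Rightarrow> real. det (Matrix.mat s s (\<lambda>(i,j). H i j)) =
      (\<Sum>p\<in>{p. p permutes {0..<s}}. signof p * (\<Prod>i = 0..<s. H i (p i)))"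
  proof -
    fix H :: "nat \<Rightarrow> nat \<Rightarrow> real"
    have "det (Matrix.mat s s (\<lambda>(i,j). H i j)) =
      (\<Sum>p\<in>{p. p permutes {0..<s}}. signof p * (\<Prod>i = 0..<s. Matrix.mat s s (\<lambda>(i,j). H i j) $$ (i, p i)))"
      by (rule det_def') simp
    also have "\<dots> = (\<Sum>p\<in>{p. p permutes {0..<s}}. signof p * (\<Prod>i = 0..<s. H i (p i)))"
    proof (rule sum.cong[OF refl])
      fix p assume "p \<in> {p. p permutes {0..<s}}"
      then have "\<And>i. i < s \<Longrightarrow> p i < s" using permutes_in_image by fastforce
      then show "signof p * (\<Prod>i = 0..<s. Matrix.mat s s (\<lambda>(i,j). H i j) $$ (i, p i)) =
                 signof p * (\<Prod>i = 0..<s. H i (p i))"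
        by (auto intro!: arg_cong[where f="\<lambda>x. signof p * x"] prod.cong)
    qed
    finally show "det (Matrix.mat s s (\<lambda>(i,j). H i j)) =
      (\<Sum>p\<in>{p. p permutes {0..<s}}. signof p * (\<Prod>i = 0..<s. H i (p i)))" .
  qed
  show ?thesis unfolding d
  proof (intro tendsto_sum tendsto_mult tendsto_const tendsto_prod)
    fix p i assume p: "p \<in> {p. p permutes {0..<s}}" and i: "i \<in> {0..<s}"
    then have "p i < s" using permutes_in_image by fastforce
    then show "((\<lambda>e. F e i (p i)) \<longlongrightarrow> L i (p i)) G" using assms i by auto
  qed
qed

definition dotn :: "nat \<Rightarrow> (nat \<Rightarrow> real) \<Rightarrow> (nat \<Rightarrow> real) \<Rightarrow> real" where
  "dotn n u w = (\<Sum>i<n. u i * w i)"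

lemma dotn_scalar:
  assumes "w \<in> carrier_vec n"
  shows "dotn n (\<lambda>i. vec_index v i) (\<lambda>i. vec_index w i) = scalar_prod v w"
proof -
  have "dim_vec w = n" using assms by auto
  then show ?thesis by (simp add: dotn_def scalar_prod_def atLeast0LessThan)
qed

lemma outer_index: "i < n \<Longrightarrow> j < n \<Longrightarrow> outer n v $$ (i,j) = vec_index v i * vec_index v j"
  unfolding outer_def by simp

lemma outer_orth:
  fixes a b :: "real Matrix.vec"
  assumes a: "a \<in> carrier_vec n" and b: "b \<in> carrier_vec n"
    and aa: "scalar_prod a a = 1" and bb: "scalar_prod b b = 1"
    and z: "outer n a * outer n b = 0\<^sub>m n n"
  shows "dotn n (\<lambda>i. vec_index a i) (\<lambda>i. vec_index b i) = 0"
proof -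
  let ?d = "dotn n (\<lambda>i. vec_index a i) (\<lambda>i. vec_index b i)"
  have ent: "vec_index a i * ?d * vec_index b l = 0" if "i < n" "l < n" for i l
  proof -
    have "(outer n a * outer n b) $$ (i,l) = (\<Sum>m\<in>{0..<n}. (vec_index a i * vec_index a m) * (vec_index b m * vec_index b l))"
      using that unfolding outer_def by (simp add: scalar_prod_def)
    also have "\<dots> = (\<Sum>m<n. vec_index a i * vec_index b l * (vec_index a m * vec_index b m))"
      by (simp add: atLeast0LessThan ac_simps)
    also have "\<dots> = vec_index a i * vec_index b l * ?d"
      unfolding dotn_def by (rule sum_distrib_left[symmetric])
    finally have "(outer n a * outer n b) $$ (i,l) = vec_index a i * ?d * vec_index b l" by (simp add: ac_simps)
    moreover have "(outer n a * outer n b) $$ (i,l) = 0" using z that by simp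
    ultimately show ?thesis by simp
  qed
  have s1: "?d * vec_index b l = 0" if "l < n" for l
  proof -
    have "(\<Sum>i<n. vec_index a i * (vec_index a i * ?d * vec_index b l)) = 0"
      by (rule sum.neutral) (use ent that in force)
    moreover have "(\<Sum>i<n. vec_index a i * (vec_index a i * ?d * vec_index b l)) = (\<Sum>i<n. vec_index a i * vec_index a i) * (?d * vec_index b l)"
      by (simp add: sum_distrib_left sum_distrib_right ac_simps)
    moreover have "(\<Sum>i<n. vec_index a i * vec_index a i) = 1" using aa a by (simp add: scalar_prod_def atLeast0LessThan)
    ultimately show ?thesis by simp
  qed
  have "(\<Sum>l<n. ?d * vec_index b l * vec_index b l) = 0"
    by (rule sum.neutral) (use s1 in force)
  moreover have "(\<Sum>l<n. ?d * vec_index b l * vec_index b l) = ?d * (\<Sum>l<n. vec_index b l * vec_index b l)"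
    by (simp add: sum_distrib_left ac_simps)
  moreover have "(\<Sum>l<n. vec_index b l * vec_index b l) = 1" using bb b by (simp add: scalar_prod_def atLeast0LessThan)
  ultimately show ?thesis by simp
qed

locale thm45 =
  fixes f :: "real \<Rightarrow> real" and b :: real and r n :: nat and x :: "nat \<Rightarrow> real"
    and \<epsilon>0 \<delta> :: real
    and lam :: "nat \<Rightarrow> real \<Rightarrow> real" and P :: "nat \<Rightarrow> real \<Rightarrow> real mat"
    and p :: "nat \<Rightarrow> real Matrix.vec" and lt :: "nat \<Rightarrow> real"
  assumes b_pos: "b > 0" and r_ge1: "r \<ge> 1"
    and f_smooth: "C_k_on (2*r) f {-b<..<b}"
    and f_odd0: "\<And>l. 1 \<le> l \<Longrightarrow> l < r \<Longrightarrow> (deriv ^^ (2*l - 1)) f 0 = 0"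
    and f_odd_r: "(deriv ^^ (2*r - 1)) f 0 \<noteq> 0"
    and r_le_n: "r \<le> n"
    and eps0_pos: "\<epsilon>0 > 0"
    and K_psd: "\<And>\<epsilon>. 0 \<le> \<epsilon> \<Longrightarrow> \<epsilon> \<le> \<epsilon>0 \<Longrightarrow> psd_mat n (Kmat f n x \<epsilon>)"
    and K_analytic: "mat_analytic_near0 n (Kmat f n x)"
    and delta_pos: "\<delta> > 0"
    and lam_analytic: "\<And>k. k < n \<Longrightarrow> real_analytic_near0 (lam k)"
    and P_analytic: "\<And>k. k < n \<Longrightarrow> mat_analytic_near0 n (P k)"
    and P_rank1: "\<And>\<epsilon> k. \<bar>\<epsilon>\<bar> < \<delta> \<Longrightarrow> k < n \<Longrightarrow>
                    \<exists>v\<in>carrier_vec n. scalar_prod v v = 1 \<and> P k \<epsilon> = outer n v"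
    and P_orth: "\<And>\<epsilon> k j. \<bar>\<epsilon>\<bar> < \<delta> \<Longrightarrow> k < n \<Longrightarrow> j < n \<Longrightarrow> k \<noteq> j \<Longrightarrow>
                    P k \<epsilon> * P j \<epsilon> = 0\<^sub>m n n"
    and K_decomp: "\<And>\<epsilon> i j. \<bar>\<epsilon>\<bar> < \<delta> \<Longrightarrow> i < n \<Longrightarrow> j < n \<Longrightarrow>
                    Kmat f n x \<epsilon> $$ (i,j) = (\<Sum>k<n. lam k \<epsilon> * P k \<epsilon> $$ (i,j))"
    and lam_sorted: "\<And>\<epsilon> k. 0 < \<epsilon> \<Longrightarrow> \<epsilon> < \<delta> \<Longrightarrow> Suc k < n \<Longrightarrow> lam (Suc k) \<epsilon> \<le> lam k \<epsilon>"
    and p_unit: "\<And>k. k < n \<Longrightarrow> p k \<in> carrier_vec n \<and> scalar_prod (p k) (p k) = 1"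
    and p_limit: "\<And>k. k < n \<Longrightarrow> P k 0 = outer n (p k)"
    and lam_asymp: "\<And>s. s < n \<Longrightarrow> \<exists>C \<eta>. \<eta> > 0 \<and> (\<forall>\<epsilon>. 0 < \<epsilon> \<and> \<epsilon> < \<eta> \<longrightarrow>
          \<bar>lam s \<epsilon> - \<epsilon> ^ eig_order r s * lt s\<bar>
            \<le> C * \<epsilon> ^ (eig_order r s + 1))"
begin

definition vv :: "nat \<Rightarrow> real \<Rightarrow> real Matrix.vec" where
  "vv k e = (SOME v. v \<in> carrier_vec n \<and> scalar_prod v v = 1 \<and> P k e = outer n v)"

definition vf :: "nat \<Rightarrow> real \<Rightarrow> nat \<Rightarrow> real" where
  "vf k e = (\<lambda>i. vec_index (vv k e) i)"

definition pf :: "nat \<Rightarrow> nat \<Rightarrow> real" where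
  "pf k = (\<lambda>i. vec_index (p k) i)"

definition xp :: "nat \<Rightarrow> nat \<Rightarrow> real" where
  "xp c = (\<lambda>i. x i ^ c)"

definition kk :: "real \<Rightarrow> nat \<Rightarrow> nat \<Rightarrow> real" where
  "kk e i j = f (e * \<bar>x i - x j\<bar>)"

definition bf :: "real \<Rightarrow> (nat \<Rightarrow> real) \<Rightarrow> (nat \<Rightarrow> real) \<Rightarrow> real" where
  "bf e u w = (\<Sum>i<n. \<Sum>j<n. u i * w j * kk e i j)"

definition Pf :: "nat \<Rightarrow> real \<Rightarrow> (nat \<Rightarrow> real) \<Rightarrow> (nat \<Rightarrow> real) \<Rightarrow> real" where
  "Pf k e u w = (\<Sum>i<n. \<Sum>j<n. u i * w j * (P k e $$ (i,j)))"

lemma vv_props: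
  assumes "\<bar>e\<bar> < \<delta>" "k < n"
  shows "vv k e \<in> carrier_vec n" "scalar_prod (vv k e) (vv k e) = 1" "P k e = outer n (vv k e)"
proof -
  from P_rank1[OF assms] obtain v where "v \<in> carrier_vec n \<and> scalar_prod v v = 1 \<and> P k e = outer n v" by blast
  then have "vv k e \<in> carrier_vec n \<and> scalar_prod (vv k e) (vv k e) = 1 \<and> P k e = outer n (vv k e)"
    unfolding vv_def by (rule someI)
  then show "vv k e \<in> carrier_vec n" "scalar_prod (vv k e) (vv k e) = 1" "P k e = outer n (vv k e)" by auto
qed

lemma P_entry:
  assumes "\<bar>e\<bar> < \<delta>" "k < n" "i < n" "j < n"
  shows "P k e $$ (i,j) = vf k e i * vf k e j"
  using vv_props(3)[OF assms(1,2)] assms(3,4) by (simp add: outer_index vf_def)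

lemma P0_entry:
  assumes "k < n" "i < n" "j < n"
  shows "P k 0 $$ (i,j) = pf k i * pf k j"
  using p_limit[OF assms(1)] assms(2,3) by (simp add: outer_index pf_def)

lemma Pf_vf:
  assumes "\<bar>e\<bar> < \<delta>" "k < n"
  shows "Pf k e u w = dotn n u (vf k e) * dotn n w (vf k e)"
proof -
  have "Pf k e u w = (\<Sum>i<n. \<Sum>j<n. (u i * vf k e i) * (w j * vf k e j))"
    unfolding Pf_def by (intro sum.cong refl) (simp add: P_entry[OF assms] ac_simps)
  also have "\<dots> = dotn n u (vf k e) * dotn n w (vf k e)"
    unfolding dotn_def sum_product ..
  finally show ?thesis .
qed

lemma Pf0:
  assumes "k < n"
  shows "Pf k 0 u w = dotn n u (pf k) * dotn n w (pf k)"
proof -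
  have "Pf k 0 u w = (\<Sum>i<n. \<Sum>j<n. (u i * pf k i) * (w j * pf k j))"
    unfolding Pf_def by (intro sum.cong refl) (simp add: P0_entry[OF assms] ac_simps)
  also have "\<dots> = dotn n u (pf k) * dotn n w (pf k)"
    unfolding dotn_def sum_product ..
  finally show ?thesis .
qed

lemma vf_unit:
  assumes "\<bar>e\<bar> < \<delta>" "k < n"
  shows "dotn n (vf k e) (vf k e) = 1"
  unfolding vf_def dotn_scalar[OF vv_props(1)[OF assms]] by (rule vv_props(2)[OF assms])

lemma vf_orth:
  assumes "\<bar>e\<bar> < \<delta>" "k < n" "j < n" "k \<noteq> j"
  shows "dotn n (vf k e) (vf j e) = 0"
proof -
  have z: "outer n (vv k e) * outer n (vv j e) = 0\<^sub>m n n"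
    using P_orth[OF assms] vv_props(3)[OF assms(1,2)] vv_props(3)[OF assms(1,3)] by simp
  show ?thesis unfolding vf_def
    by (rule outer_orth[OF vv_props(1)[OF assms(1,2)] vv_props(1)[OF assms(1,3)]
          vv_props(2)[OF assms(1,2)] vv_props(2)[OF assms(1,3)] z])
qed

lemma pf_unit: assumes "k < n" shows "dotn n (pf k) (pf k) = 1"
proof -
  have c: "p k \<in> carrier_vec n" and u: "scalar_prod (p k) (p k) = 1" using p_unit[OF assms] by auto
  show ?thesis unfolding pf_def dotn_scalar[OF c] by (rule u)
qed

lemma pf_orth:
  assumes "k < n" "j < n" "k \<noteq> j"
  shows "dotn n (pf k) (pf j) = 0"
proof -
  have z: "outer n (p k) * outer n (p j) = 0\<^sub>m n n"
    using P_orth[of 0, OF _ assms] delta_pos p_limit[OF assms(1)] p_limit[OF assms(2)] by simp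
  have c: "p k \<in> carrier_vec n" "scalar_prod (p k) (p k) = 1" using p_unit[OF assms(1)] by auto
  have d: "p j \<in> carrier_vec n" "scalar_prod (p j) (p j) = 1" using p_unit[OF assms(2)] by auto
  show ?thesis unfolding pf_def
    by (rule outer_orth[OF c(1) d(1) c(2) d(2) z])
qed

lemma kk_decomp:
  assumes "\<bar>e\<bar> < \<delta>" "i < n" "j < n"
  shows "kk e i j = (\<Sum>k<n. lam k e * P k e $$ (i,j))"
  using K_decomp[OF assms] assms unfolding kk_def Kmat_def by simp

lemma bf_decomp:
  assumes "\<bar>e\<bar> < \<delta>"
  shows "bf e u w = (\<Sum>k<n. lam k e * Pf k e u w)"
proof -
  have "bf e u w = (\<Sum>i<n. \<Sum>j<n. \<Sum>k<n. lam k e * (u i * w j * P k e $$ (i,j)))"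
    unfolding bf_def using kk_decomp[OF assms]
    by (intro sum.cong refl) (simp add: sum_distrib_left algebra_simps)
  also have "\<dots> = (\<Sum>i<n. \<Sum>k<n. \<Sum>j<n. lam k e * (u i * w j * P k e $$ (i,j)))"
    by (rule sum.cong[OF refl], rule sum.swap)
  also have "\<dots> = (\<Sum>k<n. \<Sum>i<n. \<Sum>j<n. lam k e * (u i * w j * P k e $$ (i,j)))"
    by (rule sum.swap)
  also have "\<dots> = (\<Sum>k<n. lam k e * Pf k e u w)"
    unfolding Pf_def by (simp add: sum_distrib_left)
  finally show ?thesis .
qed

end

context thm45
begin

lemma ev_small: "eventually (\<lambda>e. 0 < e \<and> e < \<delta> \<and> e \<le> \<epsilon>0) (at_right 0)"
proof -
  have "eventually (\<lambda>e. e \<in> {0<..<min \<delta> \<epsilon>0}) (at_right (0::real))"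
    by (rule eventually_at_right_real) (use delta_pos eps0_pos in simp)
  then show ?thesis by (rule eventually_mono) auto
qed

lemma bf_psd:
  assumes "0 \<le> e" "e \<le> \<epsilon>0"
  shows "bf e u u \<ge> 0"
proof -
  have psd: "psd_mat n (Kmat f n x e)" by (rule K_psd[OF assms])
  let ?v = "Matrix.vec n u"
  have "?v \<in> carrier_vec n" by simp
  then have ge: "scalar_prod ?v (Kmat f n x e *\<^sub>v ?v) \<ge> 0" using psd unfolding psd_mat_def by blast
  have "scalar_prod ?v (Kmat f n x e *\<^sub>v ?v) = (\<Sum>i<n. u i * (\<Sum>j<n. kk e i j * u j))"
    by (simp add: scalar_prod_def Kmat_def kk_def atLeast0LessThan)
  also have "\<dots> = bf e u u"
    unfolding bf_def by (simp add: sum_distrib_left ac_simps)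
  finally show ?thesis using ge by simp
qed

lemma lam_eq:
  assumes e: "\<bar>e\<bar> < \<delta>" and k: "k < n"
  shows "lam k e = bf e (vf k e) (vf k e)"
proof -
  have "bf e (vf k e) (vf k e) = (\<Sum>j<n. lam j e * Pf j e (vf k e) (vf k e))"
    by (rule bf_decomp[OF e])
  also have "\<dots> = (\<Sum>j<n. if j = k then lam k e else 0)"
  proof (rule sum.cong[OF refl])
    fix j assume j: "j \<in> {..<n}"
    have "Pf j e (vf k e) (vf k e) = dotn n (vf k e) (vf j e) * dotn n (vf k e) (vf j e)"
      using Pf_vf[OF e] j by simp
    also have "\<dots> = (if j = k then 1 else 0)"
      using vf_unit[OF e k] vf_orth[OF e k] j by auto
    finally show "lam j e * Pf j e (vf k e) (vf k e) = (if j = k then lam k e else 0)" by simp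
  qed
  also have "\<dots> = lam k e" using k by simp
  finally show ?thesis by simp
qed

lemma lam_nonneg:
  assumes "0 \<le> e" "e < \<delta>" "e \<le> \<epsilon>0" "k < n"
  shows "lam k e \<ge> 0"
proof -
  have "\<bar>e\<bar> < \<delta>" using assms by simp
  then show ?thesis using lam_eq[of e k] bf_psd[of e "vf k e"] assms by simp
qed

lemma Pf_nonneg:
  assumes "\<bar>e\<bar> < \<delta>" "k < n"
  shows "Pf k e u u \<ge> 0"
  using Pf_vf[OF assms] by simp

lemma lam_Pf_le:
  assumes e: "0 \<le> e" "e < \<delta>" "e \<le> \<epsilon>0" and j: "j < n"
  shows "lam j e * Pf j e u u \<le> bf e u u"
proof -
  have ae: "\<bar>e\<bar> < \<delta>" using e by simp
  have nn: "\<And>k. k \<in> {..<n} \<Longrightarrow> 0 \<le> lam k e * Pf k e u u"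
    using lam_nonneg[OF e] Pf_nonneg[OF ae] by simp
  have "lam j e * Pf j e u u \<le> (\<Sum>k<n. lam k e * Pf k e u u)"
    by (rule member_le_sum[of j "{..<n}" "\<lambda>k. lam k e * Pf k e u u"]) (use nn j in auto)
  also have "\<dots> = bf e u u" using bf_decomp[OF ae] by simp
  finally show ?thesis .
qed

lemma Pf_cross:
  assumes "\<bar>e\<bar> < \<delta>" "k < n"
  shows "\<bar>Pf k e u w\<bar> \<le> (Pf k e u u + Pf k e w w) / 2"
proof -
  let ?a = "dotn n u (vf k e)" and ?b = "dotn n w (vf k e)"
  have "\<bar>?a * ?b\<bar> \<le> (?a * ?a + ?b * ?b) / 2"
  proof -
    have "0 \<le> (\<bar>?a\<bar> - \<bar>?b\<bar>)^2" by simp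
    then show ?thesis by (simp add: power2_eq_square abs_mult algebra_simps)
  qed
  then show ?thesis using Pf_vf[OF assms] by simp
qed

lemma dotn_abs_le:
  assumes "\<And>i. i < n \<Longrightarrow> \<bar>v i\<bar> \<le> 1"
  shows "\<bar>dotn n u v\<bar> \<le> (\<Sum>i<n. \<bar>u i\<bar>)"
proof -
  have "\<bar>dotn n u v\<bar> \<le> (\<Sum>i<n. \<bar>u i * v i\<bar>)" unfolding dotn_def by (rule sum_abs)
  also have "\<dots> \<le> (\<Sum>i<n. \<bar>u i\<bar>)"
  proof (rule sum_mono)
    fix i assume "i \<in> {..<n}"
    then have "\<bar>v i\<bar> \<le> 1" using assms by simp
    then show "\<bar>u i * v i\<bar> \<le> \<bar>u i\<bar>" by (simp add: abs_mult mult_left_le)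
  qed
  finally show ?thesis .
qed

lemma vf_le1:
  assumes "\<bar>e\<bar> < \<delta>" "k < n" "i < n"
  shows "\<bar>vf k e i\<bar> \<le> 1"
proof -
  have "vf k e i * vf k e i \<le> (\<Sum>j<n. vf k e j * vf k e j)"
    by (rule member_le_sum[of i "{..<n}" "\<lambda>j. vf k e j * vf k e j"]) (use assms in auto)
  also have "\<dots> = 1" using vf_unit[OF assms(1,2)] unfolding dotn_def .
  finally have "(vf k e i)^2 \<le> 1^2" by (simp add: power2_eq_square)
  then show ?thesis using abs_le_square_iff[of "vf k e i" 1] by simp
qed

lemma Pf_bound:
  assumes "\<bar>e\<bar> < \<delta>" "k < n"
  shows "\<bar>Pf k e u w\<bar> \<le> (\<Sum>i<n. \<bar>u i\<bar>) * (\<Sum>i<n. \<bar>w i\<bar>)"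
proof -
  have "\<bar>Pf k e u w\<bar> = \<bar>dotn n u (vf k e)\<bar> * \<bar>dotn n w (vf k e)\<bar>"
    using Pf_vf[OF assms] by (simp add: abs_mult)
  also have "\<dots> \<le> (\<Sum>i<n. \<bar>u i\<bar>) * (\<Sum>i<n. \<bar>w i\<bar>)"
    by (intro mult_mono dotn_abs_le vf_le1[OF assms]) (auto intro: sum_nonneg)
  finally show ?thesis .
qed

lemma P_entry_analytic:
  assumes "k < n" "i < n" "j < n"
  shows "real_analytic_near0 (\<lambda>e. P k e $$ (i,j))"
  using P_analytic[OF assms(1)] assms(2,3) unfolding mat_analytic_near0_def by blast

lemma Pf_analytic:
  assumes k: "k < n"
  shows "real_analytic_near0 (\<lambda>e. Pf k e u w)"
proof -
  have inner: "real_analytic_near0 (\<lambda>e. \<Sum>j<n. (u i * w j) * P k e $$ (i,j))" if "i < n" for i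
    by (rule ra_sum) (use P_entry_analytic[OF k that] in auto)
  have "real_analytic_near0 (\<lambda>e. \<Sum>i<n. 1 * (\<Sum>j<n. (u i * w j) * P k e $$ (i,j)))"
    by (rule ra_sum[where g="\<lambda>i e. \<Sum>j<n. (u i * w j) * P k e $$ (i,j)"]) (use inner in auto)
  then show ?thesis unfolding Pf_def by simp
qed

lemma Pf_lim:
  assumes k: "k < n"
  shows "((\<lambda>e. Pf k e u w) \<longlongrightarrow> Pf k 0 u w) (at 0)"
  using ra_limit0[OF Pf_analytic[OF k]] .

lemma Pf_lim_right:
  assumes k: "k < n"
  shows "((\<lambda>e. Pf k e u w) \<longlongrightarrow> dotn n u (pf k) * dotn n w (pf k)) (at_right 0)"
  using lim_at_right[OF Pf_lim[OF k]] Pf0[OF k] by simp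

lemma lam_lim:
  assumes k: "k < n"
  shows "((\<lambda>e. lam k e / e ^ eig_order r k) \<longlongrightarrow> lt k) (at_right 0)"
proof -
  let ?m = "eig_order r k"
  obtain C \<eta> where eta: "\<eta> > 0" and hb: "\<And>e. 0 < e \<Longrightarrow> e < \<eta> \<Longrightarrow>
      \<bar>lam k e - e ^ ?m * lt k\<bar> \<le> C * e ^ (?m + 1)"
    using lam_asymp[OF k] by blast
  have ev: "eventually (\<lambda>e. \<bar>lam k e / e ^ ?m - lt k\<bar> \<le> \<bar>C\<bar> * e) (at_right 0)"
  proof -
    have "eventually (\<lambda>e. e \<in> {0<..<\<eta>}) (at_right (0::real))"
      by (rule eventually_at_right_real) (use eta in simp)
    then show ?thesis
    proof (rule eventually_mono)
      fix e :: real assume "e \<in> {0<..<\<eta>}"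
      then have e: "0 < e" "e < \<eta>" by auto
      have pos: "e ^ ?m > 0" using e by simp
      have "(lam k e - e ^ ?m * lt k) / e ^ ?m = lam k e / e ^ ?m - lt k"
        using pos e(1) by (simp add: diff_divide_distrib)
      then have "lam k e / e ^ ?m - lt k = (lam k e - e ^ ?m * lt k) / e ^ ?m" by simp
      then have "\<bar>lam k e / e ^ ?m - lt k\<bar> = \<bar>lam k e - e ^ ?m * lt k\<bar> / e ^ ?m"
        using pos by (simp add: abs_divide)
      also have "\<dots> \<le> C * e ^ (?m + 1) / e ^ ?m"
        using hb[OF e] pos by (intro divide_right_mono) auto
      also have "\<dots> = C * e" using pos by (simp add: field_simps)
      also have "\<dots> \<le> \<bar>C\<bar> * e" using e by (intro mult_right_mono) auto
      finally show "\<bar>lam k e / e ^ ?m - lt k\<bar> \<le> \<bar>C\<bar> * e" .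
    qed
  qed
  have "((\<lambda>e. \<bar>C\<bar> * e) \<longlongrightarrow> \<bar>C\<bar> * 0) (at_right (0::real))" by (intro tendsto_intros)
  then have "((\<lambda>e. \<bar>C\<bar> * e) \<longlongrightarrow> 0) (at_right (0::real))" by simp
  then have "((\<lambda>e. lam k e / e ^ ?m - lt k) \<longlongrightarrow> 0) (at_right 0)"
    by (rule tendsto_0_le[of _ _ _ 1]) (use ev in \<open>auto elim: eventually_mono\<close>)
  then have "((\<lambda>e. (lam k e / e ^ ?m - lt k) + lt k) \<longlongrightarrow> 0 + lt k) (at_right 0)"
    by (intro tendsto_add tendsto_const)
  then show ?thesis by simp
qed

lemma lt_nonneg:
  assumes k: "k < n"
  shows "lt k \<ge> 0"
proof (rule tendsto_lowerbound[OF lam_lim[OF k]])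
  show "eventually (\<lambda>e. lam k e / e ^ eig_order r k \<ge> 0) (at_right 0)"
    using ev_small by (rule eventually_mono) (use lam_nonneg k in auto)
qed simp

lemma lam_small:
  assumes k: "k < n" and a: "a < eig_order r k"
  shows "((\<lambda>e. lam k e / e ^ a) \<longlongrightarrow> 0) (at_right 0)"
proof -
  let ?m = "eig_order r k"
  have "((\<lambda>e. (lam k e / e ^ ?m) * e ^ (?m - a)) \<longlongrightarrow> lt k * 0 ^ (?m - a)) (at_right 0)"
    by (intro tendsto_intros lam_lim[OF k])
  then have lim: "((\<lambda>e. (lam k e / e ^ ?m) * e ^ (?m - a)) \<longlongrightarrow> 0) (at_right 0)"
    using a by (simp add: power_0_left)
  have "eventually (\<lambda>e. (lam k e / e ^ ?m) * e ^ (?m - a) = lam k e / e ^ a) (at_right (0::real))"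
    using eventually_at_right_less[of "0::real"]
  proof (rule eventually_mono)
    fix e :: real assume e: "0 < e"
    have "e ^ ?m = e ^ a * e ^ (?m - a)" using a by (simp add: power_add[symmetric])
    then show "(lam k e / e ^ ?m) * e ^ (?m - a) = lam k e / e ^ a" using e by (simp add: field_simps)
  qed
  then show ?thesis using lim by (simp add: tendsto_cong)
qed

lemma lam_mono:
  assumes e: "0 < e" "e < \<delta>" and jk: "j \<le> k" and k: "k < n"
  shows "lam k e \<le> lam j e"
  using jk k
proof (induction k)
  case 0 then show ?case by simp
next
  case (Suc k)
  show ?case
  proof (cases "j = Suc k")
    case True then show ?thesis by simp
  next
    case False
    then have "j \<le> k" using Suc by simp
    then have "lam k e \<le> lam j e" using Suc by simp
    moreover have "lam (Suc k) e \<le> lam k e" using lam_sorted[OF e] Suc by simp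
    ultimately show ?thesis by simp
  qed
qed

lemma lam_lower:
  assumes k: "k < n" and pos: "lt k > 0"
  shows "eventually (\<lambda>e. lam k e \<ge> lt k / 2 * e ^ eig_order r k) (at_right 0)"
proof -
  have "eventually (\<lambda>e. lam k e / e ^ eig_order r k > lt k / 2) (at_right 0)"
    by (rule order_tendstoD(1)[OF lam_lim[OF k]]) (use pos in simp)
  then have "eventually (\<lambda>e. lam k e / e ^ eig_order r k > lt k / 2 \<and> 0 < e) (at_right 0)"
    using eventually_at_right_less[of "0::real"] by (rule eventually_conj)
  then show ?thesis
  proof (rule eventually_mono)
    fix e :: real assume h: "lam k e / e ^ eig_order r k > lt k / 2 \<and> 0 < e"
    then have pos: "e ^ eig_order r k > 0" by simp
    have "lt k / 2 < lam k e / e ^ eig_order r k" using h by simp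
    then have "lt k / 2 * e ^ eig_order r k < lam k e" by (simp add: pos_less_divide_eq[OF pos])
    then show "lam k e \<ge> lt k / 2 * e ^ eig_order r k" by simp
  qed
qed

end

context thm45
begin

definition Sabs :: "nat \<Rightarrow> (nat \<Rightarrow> real) \<Rightarrow> (nat \<Rightarrow> real) \<Rightarrow> real" where
  "Sabs m u w = (\<Sum>i<n. \<Sum>j<n. u i * w j * \<bar>x i - x j\<bar> ^ m)"

definition Sdiff :: "nat \<Rightarrow> (nat \<Rightarrow> real) \<Rightarrow> (nat \<Rightarrow> real) \<Rightarrow> real" where
  "Sdiff m u w = (\<Sum>i<n. \<Sum>j<n. u i * w j * (x i - x j) ^ m)"

definition Spoly :: "nat \<Rightarrow> (nat \<Rightarrow> real) \<Rightarrow> (nat \<Rightarrow> real) \<Rightarrow> real" where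
  "Spoly m u w = (\<Sum>a\<le>m. real (m choose a) * (-1) ^ (m - a) * dotn n u (xp a) * dotn n w (xp (m - a)))"

lemma bf_taylor:
  assumes N: "N < 2 * r"
  shows "((\<lambda>e. (bf e u w - (\<Sum>m\<le>N. tcoef f m * e ^ m * Sabs m u w)) / e ^ N) \<longlongrightarrow> 0) (at_right 0)"
proof -
  define R where "R e i j = (f (e * \<bar>x i - x j\<bar>) - (\<Sum>m\<le>N. tcoef f m * e ^ m * \<bar>x i - x j\<bar> ^ m)) / e ^ N"
    for e i j
  have Rlim: "((\<lambda>e. R e i j) \<longlongrightarrow> 0) (at_right 0)" for i j
    unfolding R_def by (rule taylor_scaled[OF b_pos f_smooth N]) simp
  have "((\<lambda>e. \<Sum>i<n. \<Sum>j<n. u i * w j * R e i j) \<longlongrightarrow> (\<Sum>i<n. \<Sum>j<n. u i * w j * 0)) (at_right 0)"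
    by (intro tendsto_sum tendsto_mult_left Rlim)
  then have lim: "((\<lambda>e. \<Sum>i<n. \<Sum>j<n. u i * w j * R e i j) \<longlongrightarrow> 0) (at_right 0)" by simp
  have eq: "(bf e u w - (\<Sum>m\<le>N. tcoef f m * e ^ m * Sabs m u w)) / e ^ N =
            (\<Sum>i<n. \<Sum>j<n. u i * w j * R e i j)" for e
  proof -
    have "(\<Sum>m\<le>N. tcoef f m * e ^ m * Sabs m u w) =
          (\<Sum>m\<le>N. \<Sum>i<n. \<Sum>j<n. u i * w j * (tcoef f m * e ^ m * \<bar>x i - x j\<bar> ^ m))"
      unfolding Sabs_def by (simp add: sum_distrib_left ac_simps)
    also have "\<dots> = (\<Sum>i<n. \<Sum>m\<le>N. \<Sum>j<n. u i * w j * (tcoef f m * e ^ m * \<bar>x i - x j\<bar> ^ m))"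
      by (rule sum.swap)
    also have "\<dots> = (\<Sum>i<n. \<Sum>j<n. \<Sum>m\<le>N. u i * w j * (tcoef f m * e ^ m * \<bar>x i - x j\<bar> ^ m))"
      by (rule sum.cong[OF refl], rule sum.swap)
    also have "\<dots> = (\<Sum>i<n. \<Sum>j<n. u i * w j * (\<Sum>m\<le>N. tcoef f m * e ^ m * \<bar>x i - x j\<bar> ^ m))"
      by (simp add: sum_distrib_left)
    finally have A: "(\<Sum>m\<le>N. tcoef f m * e ^ m * Sabs m u w) =
          (\<Sum>i<n. \<Sum>j<n. u i * w j * (\<Sum>m\<le>N. tcoef f m * e ^ m * \<bar>x i - x j\<bar> ^ m))" .
    have "bf e u w - (\<Sum>m\<le>N. tcoef f m * e ^ m * Sabs m u w) =
          (\<Sum>i<n. \<Sum>j<n. u i * w j * (kk e i j - (\<Sum>m\<le>N. tcoef f m * e ^ m * \<bar>x i - x j\<bar> ^ m)))"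
      unfolding A bf_def by (simp add: sum_subtractf right_diff_distrib)
    then show ?thesis
      unfolding R_def kk_def by (simp add: sum_divide_distrib)
  qed
  show ?thesis unfolding eq using lim .
qed

lemma double_sum_product:
  fixes A B :: "nat \<Rightarrow> real"
  shows "(\<Sum>i<n. \<Sum>j<n. c * (A i * B j)) = c * ((\<Sum>i<n. A i) * (\<Sum>j<n. B j))"
proof -
  have "c * ((\<Sum>i<n. A i) * (\<Sum>j<n. B j)) = c * (\<Sum>i<n. \<Sum>j<n. A i * B j)"
    by (simp only: sum_product)
  also have "\<dots> = (\<Sum>i<n. \<Sum>j<n. c * (A i * B j))" by (simp add: sum_distrib_left)
  finally show ?thesis by simp
qed

lemma Sdiff_Spoly: "Sdiff m u w = Spoly m u w"
proof -
  have bin: "u i * w j * (x i - x j) ^ m = (\<Sum>a\<le>m. real (m choose a) * (-1) ^ (m - a) * ((u i * x i ^ a) * (w j * x j ^ (m - a))))" for i j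
  proof -
    have "(x i - x j) ^ m = (x i + (- x j)) ^ m" by simp
    also have "\<dots> = (\<Sum>a\<le>m. real (m choose a) * x i ^ a * (- x j) ^ (m - a))"
      by (rule binomial_ring)
    finally have "u i * w j * (x i - x j) ^ m = u i * w j * (\<Sum>a\<le>m. real (m choose a) * x i ^ a * (- x j) ^ (m - a))"
      by simp
    also have "\<dots> = (\<Sum>a\<le>m. u i * w j * (real (m choose a) * x i ^ a * (- x j) ^ (m - a)))"
      by (rule sum_distrib_left)
    also have "\<dots> = (\<Sum>a\<le>m. real (m choose a) * (-1) ^ (m - a) * ((u i * x i ^ a) * (w j * x j ^ (m - a))))"
    proof (rule sum.cong[OF refl])
      fix a
      have "(- x j) ^ (m - a) = (-1) ^ (m - a) * x j ^ (m - a)" by (rule power_minus)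
      then show "u i * w j * (real (m choose a) * x i ^ a * (- x j) ^ (m - a)) =
          real (m choose a) * (-1) ^ (m - a) * ((u i * x i ^ a) * (w j * x j ^ (m - a)))"
        by (simp only: mult_ac)
    qed
    finally show ?thesis .
  qed
  have "Sdiff m u w = (\<Sum>i<n. \<Sum>j<n. \<Sum>a\<le>m.
        real (m choose a) * (-1) ^ (m - a) * ((u i * x i ^ a) * (w j * x j ^ (m - a))))"
    unfolding Sdiff_def bin ..
  also have "\<dots> = (\<Sum>i<n. \<Sum>a\<le>m. \<Sum>j<n.
        real (m choose a) * (-1) ^ (m - a) * ((u i * x i ^ a) * (w j * x j ^ (m - a))))"
    by (rule sum.cong[OF refl], rule sum.swap)
  also have "\<dots> = (\<Sum>a\<le>m. \<Sum>i<n. \<Sum>j<n.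
        real (m choose a) * (-1) ^ (m - a) * ((u i * x i ^ a) * (w j * x j ^ (m - a))))"
    by (rule sum.swap)
  also have "\<dots> = Spoly m u w"
    unfolding Spoly_def dotn_def xp_def
  proof (rule sum.cong[OF refl])
    fix a
    show "(\<Sum>i<n. \<Sum>j<n. real (m choose a) * (-1) ^ (m - a) * ((u i * x i ^ a) * (w j * x j ^ (m - a)))) =
      real (m choose a) * (-1) ^ (m - a) * (\<Sum>i<n. u i * x i ^ a) * (\<Sum>i<n. w i * x i ^ (m - a))"
      by (subst double_sum_product) (simp only: mult_ac)
  qed
  finally show ?thesis .
qed

lemma tcoef_odd_zero:
  assumes "odd m" "m \<le> 2 * r - 2"
  shows "tcoef f m = 0"
proof -
  define l where "l = m div 2 + 1"
  have m2: "2 * (m div 2) + 1 = m" using assms(1) by (rule odd_two_times_div_two_succ)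
  have l: "m = 2 * l - 1" "1 \<le> l" unfolding l_def using m2 by auto
  have "l < r" using l assms(2) by linarith
  then have "(deriv ^^ m) f 0 = 0" using f_odd0[OF l(2)] l(1) by simp
  then show ?thesis unfolding tcoef_def by simp
qed

lemma Sabs_Sdiff:
  assumes "m \<le> 2 * r - 2"
  shows "tcoef f m * Sabs m u w = tcoef f m * Sdiff m u w"
proof (cases "even m")
  case True
  then have "\<And>i j. \<bar>x i - x j\<bar> ^ m = (x i - x j) ^ m" by (simp add: power_even_abs)
  then show ?thesis unfolding Sabs_def Sdiff_def by simp
next
  case False
  then show ?thesis using tcoef_odd_zero[OF _ assms] by simp
qed

lemma Spoly_zero:
  assumes "\<And>a. a \<le> m \<Longrightarrow> dotn n u (xp a) = 0 \<or> dotn n w (xp (m - a)) = 0"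
  shows "Spoly m u w = 0"
  unfolding Spoly_def by (rule sum.neutral) (use assms in force)

end

lemma sum_single:
  assumes "finite A" "a \<in> A" "\<And>c. c \<in> A \<Longrightarrow> c \<noteq> a \<Longrightarrow> F c = (0::real)"
  shows "sum F A = F a"
proof -
  have "sum F A = F a + sum F (A - {a})" using assms(1,2) by (rule sum.remove)
  moreover have "sum F (A - {a}) = 0" by (rule sum.neutral) (use assms(3) in auto)
  ultimately show ?thesis by simp
qed

context thm45
begin

lemma bf_lead:
  assumes N: "N < 2 * r" and z: "\<And>m. m < N \<Longrightarrow> tcoef f m * Sabs m u w = 0"
  shows "((\<lambda>e. bf e u w / e ^ N) \<longlongrightarrow> tcoef f N * Sabs N u w) (at_right 0)"
proof -
  let ?c = "tcoef f N * Sabs N u w"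
  have s: "(\<Sum>m\<le>N. tcoef f m * e ^ m * Sabs m u w) = ?c * e ^ N" for e
  proof -
    have "(\<Sum>m\<le>N. tcoef f m * e ^ m * Sabs m u w) = tcoef f N * e ^ N * Sabs N u w"
    proof (rule sum_single)
      fix c assume "c \<in> {..N}" "c \<noteq> N"
      then have "c < N" by simp
      then have "tcoef f c * Sabs c u w = 0" by (rule z)
      then have "(tcoef f c * Sabs c u w) * e ^ c = 0" by simp
      then show "tcoef f c * e ^ c * Sabs c u w = 0" by (simp only: ac_simps)
    qed auto
    then show ?thesis by (simp add: ac_simps)
  qed
  have "((\<lambda>e. (bf e u w - ?c * e ^ N) / e ^ N) \<longlongrightarrow> 0) (at_right 0)"
    using bf_taylor[OF N, of u w] unfolding s .
  then have "((\<lambda>e. (bf e u w - ?c * e ^ N) / e ^ N + ?c) \<longlongrightarrow> 0 + ?c) (at_right 0)"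
    by (intro tendsto_add tendsto_const)
  moreover have "eventually (\<lambda>e. (bf e u w - ?c * e ^ N) / e ^ N + ?c = bf e u w / e ^ N) (at_right (0::real))"
    using eventually_at_right_less[of "0::real"]
  proof (rule eventually_mono)
    fix e :: real assume "0 < e"
    then have "e ^ N \<noteq> 0" by simp
    then show "(bf e u w - ?c * e ^ N) / e ^ N + ?c = bf e u w / e ^ N"
      by (simp add: diff_divide_distrib)
  qed
  ultimately show ?thesis by (simp add: tendsto_cong)
qed

lemma low_terms_zero:
  assumes m: "m \<le> 2 * r - 2"
    and h: "\<And>a. a \<le> m \<Longrightarrow> dotn n u (xp a) = 0 \<or> dotn n w (xp (m - a)) = 0"
  shows "tcoef f m * Sabs m u w = 0"
  using Sabs_Sdiff[OF m, of u w] Sdiff_Spoly[of m u w] Spoly_zero[OF h] by simp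

lemma bf_perp_lim:
  assumes t: "t < r" and u: "\<And>c. c \<le> t \<Longrightarrow> dotn n u (xp c) = 0"
  shows "((\<lambda>e. bf e u u / e ^ (2 * t + 1)) \<longlongrightarrow> tcoef f (2 * t + 1) * Sabs (2 * t + 1) u u) (at_right 0)"
proof (rule bf_lead)
  show "2 * t + 1 < 2 * r" using t by simp
  fix m assume m: "m < 2 * t + 1"
  show "tcoef f m * Sabs m u u = 0"
  proof (rule low_terms_zero)
    show "m \<le> 2 * r - 2" using m t by simp
    fix a assume "a \<le> m"
    then have "a \<le> t \<or> m - a \<le> t" using m by linarith
    then show "dotn n u (xp a) = 0 \<or> dotn n u (xp (m - a)) = 0" using u by auto
  qed
qed

lemma span_zero:
  assumes t: "t < r" and ltpos: "lt t > 0" and u: "\<And>c. c \<le> t \<Longrightarrow> dotn n u (xp c) = 0"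
    and j: "j \<le> t"
  shows "dotn n u (pf j) = 0"
proof -
  have tn: "t < n" using t r_le_n by simp
  have jn: "j < n" using j tn by simp
  let ?N = "2 * t + 1"
  let ?c0 = "tcoef f ?N * Sabs ?N u u"
  have eo: "eig_order r t = 2 * t" using t unfolding eig_order_def by simp
  have lim1: "((\<lambda>e. bf e u u / e ^ ?N) \<longlongrightarrow> ?c0) (at_right 0)" by (rule bf_perp_lim[OF t u])
  have up: "((\<lambda>e. (bf e u u / e ^ ?N) * e * (2 / lt t)) \<longlongrightarrow> ?c0 * 0 * (2 / lt t)) (at_right 0)"
    by (intro tendsto_intros lim1)
  have lo: "((\<lambda>e. 0::real) \<longlongrightarrow> 0) (at_right 0)" by simp
  have ev: "eventually (\<lambda>e. 0 \<le> Pf j e u u \<and> Pf j e u u \<le> (bf e u u / e ^ ?N) * e * (2 / lt t)) (at_right 0)"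
    using eventually_conj[OF ev_small lam_lower[OF tn ltpos]]
  proof (rule eventually_mono)
    fix e assume h: "(0 < e \<and> e < \<delta> \<and> e \<le> \<epsilon>0) \<and> lt t / 2 * e ^ eig_order r t \<le> lam t e"
    have ae: "\<bar>e\<bar> < \<delta>" using h by simp
    have lb: "lt t / 2 * e ^ (2 * t) \<le> lam j e"
      using h eo lam_mono[of e j t] j tn by force
    have lbpos: "lt t / 2 * e ^ (2 * t) > 0" using h ltpos by simp
    have g0: "0 \<le> Pf j e u u" by (rule Pf_nonneg[OF ae jn])
    have bf0: "0 \<le> bf e u u" using h bf_psd by simp
    have "lam j e * Pf j e u u \<le> bf e u u" using lam_Pf_le[of e j u] h jn by simp
    then have "Pf j e u u \<le> bf e u u / lam j e" using lb lbpos by (simp add: pos_le_divide_eq mult.commute)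
    also have "\<dots> \<le> bf e u u / (lt t / 2 * e ^ (2 * t))"
      using lb lbpos bf0 by (intro divide_left_mono) auto
    also have "\<dots> = (bf e u u / e ^ ?N) * e * (2 / lt t)"
      using h ltpos by (simp add: field_simps)
    finally show "0 \<le> Pf j e u u \<and> Pf j e u u \<le> (bf e u u / e ^ ?N) * e * (2 / lt t)" using g0 by simp
  qed
  have "((\<lambda>e. Pf j e u u) \<longlongrightarrow> 0) (at_right 0)"
  proof (rule tendsto_sandwich[OF _ _ lo])
    show "eventually (\<lambda>e. 0 \<le> Pf j e u u) (at_right 0)" using ev by (rule eventually_mono) simp
    show "eventually (\<lambda>e. Pf j e u u \<le> (bf e u u / e ^ ?N) * e * (2 / lt t)) (at_right 0)"
      using ev by (rule eventually_mono) simp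
    show "((\<lambda>e. (bf e u u / e ^ ?N) * e * (2 / lt t)) \<longlongrightarrow> 0) (at_right 0)" using up by simp
  qed
  moreover have "((\<lambda>e. Pf j e u u) \<longlongrightarrow> dotn n u (pf j) * dotn n u (pf j)) (at_right 0)"
    by (rule Pf_lim_right[OF jn])
  ultimately have "dotn n u (pf j) * dotn n u (pf j) = 0"
    using tendsto_unique[OF trivial_limit_at_right_real] by blast
  then show ?thesis by simp
qed

end

lemma sum_split_at:
  fixes s n :: nat
  assumes "s \<le> n"
  shows "(\<Sum>t<n. F t) = (\<Sum>t<s. F t) + (\<Sum>t\<in>{s..<n}. (F t :: real))"
proof -
  have "(\<Sum>t\<in>{0..<s}. F t) + (\<Sum>t\<in>{s..<n}. F t) = (\<Sum>t\<in>{0..<n}. F t)"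
    using assms by (intro sum.atLeastLessThan_concat) auto
  then show ?thesis by (simp add: atLeast0LessThan)
qed

context thm45
begin

lemma core_entry_lim:
  fixes y :: "nat \<Rightarrow> nat \<Rightarrow> real"
  assumes sr: "s \<le> r"
    and tri: "\<And>a c. a < s \<Longrightarrow> c < a \<Longrightarrow> dotn n (y a) (xp c) = 0"
    and a: "a < s" and bb: "bb < s"
  shows "((\<lambda>e. bf e (y a) (y bb) / e ^ (a + bb)) \<longlongrightarrow>
     dotn n (y a) (xp a) * ((-1) ^ bb * real ((a + bb) choose bb) * tcoef f (a + bb)) * dotn n (y bb) (xp bb)) (at_right 0)"
proof -
  let ?N = "a + bb"
  have N2: "?N \<le> 2 * r - 2" using a bb sr by linarith
  have "((\<lambda>e. bf e (y a) (y bb) / e ^ ?N) \<longlongrightarrow> tcoef f ?N * Sabs ?N (y a) (y bb)) (at_right 0)"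
  proof (rule bf_lead)
    show "?N < 2 * r" using N2 r_ge1 by linarith
    fix m assume m: "m < ?N"
    show "tcoef f m * Sabs m (y a) (y bb) = 0"
    proof (rule low_terms_zero)
      show "m \<le> 2 * r - 2" using m N2 by linarith
      fix c assume c: "c \<le> m"
      show "dotn n (y a) (xp c) = 0 \<or> dotn n (y bb) (xp (m - c)) = 0"
      proof (cases "c < a")
        case True then show ?thesis using tri[OF a] by simp
      next
        case False then have "m - c < bb" using m c by linarith
        then show ?thesis using tri[OF bb] by simp
      qed
    qed
  qed
  moreover have "tcoef f ?N * Sabs ?N (y a) (y bb) =
     dotn n (y a) (xp a) * ((-1) ^ bb * real ((a + bb) choose bb) * tcoef f (a + bb)) * dotn n (y bb) (xp bb)"
  proof -
    have "tcoef f ?N * Sabs ?N (y a) (y bb) = tcoef f ?N * Spoly ?N (y a) (y bb)"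
      using Sabs_Sdiff[OF N2] Sdiff_Spoly by simp
    also have "Spoly ?N (y a) (y bb) = real (?N choose a) * (-1) ^ (?N - a) * dotn n (y a) (xp a) * dotn n (y bb) (xp (?N - a))"
      unfolding Spoly_def
    proof (rule sum_single)
      fix c assume c: "c \<in> {..?N}" "c \<noteq> a"
      show "real (?N choose c) * (-1) ^ (?N - c) * dotn n (y a) (xp c) * dotn n (y bb) (xp (?N - c)) = 0"
      proof (cases "c < a")
        case True then show ?thesis using tri[OF a] by simp
      next
        case False then have "?N - c < bb" using c by auto
        then show ?thesis using tri[OF bb] by simp
      qed
    qed auto
    also have "?N choose a = ?N choose bb" using binomial_symmetric[of a ?N] by simp
    finally have X: "tcoef f ?N * Sabs ?N (y a) (y bb) = tcoef f ?N * (real (?N choose bb) * (-1) ^ (?N - a) * dotn n (y a) (xp a) * dotn n (y bb) (xp (?N - a)))" .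
    have Na: "?N - a = bb" by simp
    show ?thesis unfolding X Na by (simp add: mult_ac)
  qed
  ultimately show ?thesis by simp
qed

lemma eig_order_gt:
  assumes "s \<le> r" "s \<le> t" "a < s" "bb < s"
  shows "a + bb < eig_order r t"
  using assms unfolding eig_order_def by auto

lemma core_hat_lim:
  fixes y :: "nat \<Rightarrow> nat \<Rightarrow> real"
  assumes sr: "s \<le> r"
    and tri: "\<And>a c. a < s \<Longrightarrow> c < a \<Longrightarrow> dotn n (y a) (xp c) = 0"
    and a: "a < s" and bb: "bb < s"
  shows "((\<lambda>e. \<Sum>t<s. lam t e * Pf t e (y a) (y bb) / e ^ (a + bb)) \<longlongrightarrow>
     dotn n (y a) (xp a) * ((-1) ^ bb * real ((a + bb) choose bb) * tcoef f (a + bb)) * dotn n (y bb) (xp bb)) (at_right 0)"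
proof -
  let ?L = "dotn n (y a) (xp a) * ((-1) ^ bb * real ((a + bb) choose bb) * tcoef f (a + bb)) * dotn n (y bb) (xp bb)"
  let ?T = "\<lambda>e. \<Sum>t\<in>{s..<n}. (lam t e / e ^ (a + bb)) * Pf t e (y a) (y bb)"
  have sn: "s \<le> n" using sr r_le_n by simp
  have tl: "(?T \<longlongrightarrow> (\<Sum>t\<in>{s..<n}. 0 * (dotn n (y a) (pf t) * dotn n (y bb) (pf t)))) (at_right 0)"
  proof (intro tendsto_sum tendsto_mult)
    fix t assume t: "t \<in> {s..<n}"
    show "((\<lambda>e. lam t e / e ^ (a + bb)) \<longlongrightarrow> 0) (at_right 0)"
      by (rule lam_small) (use t eig_order_gt[OF sr _ a bb] in auto)
    show "((\<lambda>e. Pf t e (y a) (y bb)) \<longlongrightarrow> dotn n (y a) (pf t) * dotn n (y bb) (pf t)) (at_right 0)"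
      by (rule Pf_lim_right) (use t in auto)
  qed
  then have tl0: "(?T \<longlongrightarrow> 0) (at_right 0)" by simp
  have "((\<lambda>e. bf e (y a) (y bb) / e ^ (a + bb) - ?T e) \<longlongrightarrow> ?L - 0) (at_right 0)"
    by (intro tendsto_diff core_entry_lim[OF sr tri a bb] tl0)
  moreover have "eventually (\<lambda>e. bf e (y a) (y bb) / e ^ (a + bb) - ?T e =
        (\<Sum>t<s. lam t e * Pf t e (y a) (y bb) / e ^ (a + bb))) (at_right 0)"
    using ev_small
  proof (rule eventually_mono)
    fix e assume e: "0 < e \<and> e < \<delta> \<and> e \<le> \<epsilon>0"
    then have ae: "\<bar>e\<bar> < \<delta>" by simp
    have "bf e (y a) (y bb) / e ^ (a + bb) = (\<Sum>t<n. lam t e * Pf t e (y a) (y bb) / e ^ (a + bb))"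
      unfolding bf_decomp[OF ae] by (simp add: sum_divide_distrib)
    also have "\<dots> = (\<Sum>t<s. lam t e * Pf t e (y a) (y bb) / e ^ (a + bb)) + ?T e"
      by (subst sum_split_at[OF sn]) simp
    finally show "bf e (y a) (y bb) / e ^ (a + bb) - ?T e = (\<Sum>t<s. lam t e * Pf t e (y a) (y bb) / e ^ (a + bb))"
      by simp
  qed
  ultimately show ?thesis by (simp add: tendsto_cong)
qed

end

lemma mat_eqI2:
  assumes "\<And>i j. i < s \<Longrightarrow> j < t \<Longrightarrow> F i j = G i j"
  shows "Matrix.mat s t (\<lambda>(i,j). F i j) = Matrix.mat s t (\<lambda>(i,j). G i j)"
  by (rule eq_matI) (use assms in auto)

lemma prod_pow_cancel:
  fixes e :: real
  assumes "e \<noteq> 0"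
  shows "(\<Prod>a<s. 1 / e ^ a) * (\<Prod>t<s. e ^ t) = 1"
proof -
  have "(\<Prod>a<s. 1 / e ^ a) * (\<Prod>t<s. e ^ t) = (\<Prod>a<s. 1 / e ^ a * e ^ a)"
    by (simp only: prod.distrib[symmetric])
  also have "\<dots> = 1" using assms by simp
  finally show ?thesis .
qed

context thm45
begin

lemma core_det_identity:
  fixes y :: "nat \<Rightarrow> nat \<Rightarrow> real"
  assumes sn: "s \<le> n" and e: "0 < e" "e < \<delta>"
  shows "det (Matrix.mat s s (\<lambda>(a,bb). \<Sum>t<s. lam t e * Pf t e (y a) (y bb) / e ^ (a + bb))) =
         det (Matrix.mat s s (\<lambda>(a,bb). \<Sum>t<s. Pf t e (y a) (y bb))) * (\<Prod>t<s. lam t e / e ^ (2 * t))"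
proof -
  have ae: "\<bar>e\<bar> < \<delta>" using e by simp
  define G where "G a t = dotn n (y a) (vf t e)" for a t
  define M where "M a t = (1 / e ^ a) * G a t * e ^ t" for a t
  have PG: "Pf t e (y a) (y bb) = G a t * G bb t" if "t < s" for t a bb
    unfolding G_def using Pf_vf[OF ae] that sn by simp
  have m1: "Matrix.mat s s (\<lambda>(a,bb). \<Sum>t<s. lam t e * Pf t e (y a) (y bb) / e ^ (a + bb)) =
            Matrix.mat s s (\<lambda>(a,bb). \<Sum>t<s. M a t * (lam t e / e ^ (2 * t)) * M bb t)"
  proof (rule mat_eqI2, rule sum.cong[OF refl])
    fix a bb t assume t: "t \<in> {..<s}"
    have "M a t * (lam t e / e ^ (2 * t)) * M bb t = lam t e * (G a t * G bb t) / e ^ (a + bb)"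
    proof -
      have "e ^ (2 * t) = e ^ t * e ^ t" by (simp add: mult_2 power_add)
      then show ?thesis unfolding M_def using e by (simp add: field_simps power_add)
    qed
    then show "lam t e * Pf t e (y a) (y bb) / e ^ (a + bb) = M a t * (lam t e / e ^ (2 * t)) * M bb t"
      using PG t by simp
  qed
  have m2: "Matrix.mat s s (\<lambda>(a,bb). \<Sum>t<s. Pf t e (y a) (y bb)) =
            Matrix.mat s s (\<lambda>(a,bb). \<Sum>t<s. G a t * 1 * G bb t)"
    by (rule mat_eqI2, rule sum.cong[OF refl]) (use PG in simp)
  have dM: "det (Matrix.mat s s (\<lambda>(a,t). M a t)) = det (Matrix.mat s s (\<lambda>(a,t). G a t))"
  proof -
    have "det (Matrix.mat s s (\<lambda>(a,t). M a t)) = det (Matrix.mat s s (\<lambda>(a,t). (1 / e ^ a) * G a t * e ^ t))"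
      unfolding M_def ..
    also have "\<dots> = (\<Prod>a<s. 1 / e ^ a) * (\<Prod>t<s. e ^ t) * det (Matrix.mat s s (\<lambda>(a,t). G a t))"
      by (rule det_scale_rows_cols)
    also have "\<dots> = det (Matrix.mat s s (\<lambda>(a,t). G a t))" using prod_pow_cancel[of e s] e by simp
    finally show ?thesis .
  qed
  show ?thesis unfolding m1 m2 det_gram_diag dM by simp
qed

lemma core:
  fixes y :: "nat \<Rightarrow> nat \<Rightarrow> real"
  assumes s1: "1 \<le> s" and sr: "s \<le> r"
    and tri: "\<And>a c. a < s \<Longrightarrow> c < a \<Longrightarrow> dotn n (y a) (xp c) = 0"
  shows "(\<Prod>a<s. dotn n (y a) (xp a)) ^ 2 * det (Wron f (s - 1)) =
         det (Matrix.mat s s (\<lambda>(a,bb). \<Sum>t<s. dotn n (y a) (pf t) * dotn n (y bb) (pf t))) * (\<Prod>t<s. lt t)"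
proof -
  have sn: "s \<le> n" using sr r_le_n by simp
  let ?rho = "\<lambda>a. dotn n (y a) (xp a)"
  let ?W = "\<lambda>a bb. ?rho a * ((-1) ^ bb * real ((a + bb) choose bb) * tcoef f (a + bb)) * ?rho bb"
  let ?H0 = "\<lambda>a bb. \<Sum>t<s. dotn n (y a) (pf t) * dotn n (y bb) (pf t)"
  have lim1: "((\<lambda>e. det (Matrix.mat s s (\<lambda>(a,bb). \<Sum>t<s. lam t e * Pf t e (y a) (y bb) / e ^ (a + bb))))
      \<longlongrightarrow> det (Matrix.mat s s (\<lambda>(a,bb). ?W a bb))) (at_right 0)"
    by (rule det_tendsto) (rule core_hat_lim[OF sr tri])
  have lim2: "((\<lambda>e. det (Matrix.mat s s (\<lambda>(a,bb). \<Sum>t<s. Pf t e (y a) (y bb))) * (\<Prod>t<s. lam t e / e ^ (2 * t)))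
      \<longlongrightarrow> det (Matrix.mat s s (\<lambda>(a,bb). ?H0 a bb)) * (\<Prod>t<s. lt t)) (at_right 0)"
  proof (rule tendsto_mult)
    show "((\<lambda>e. det (Matrix.mat s s (\<lambda>(a,bb). \<Sum>t<s. Pf t e (y a) (y bb))))
      \<longlongrightarrow> det (Matrix.mat s s (\<lambda>(a,bb). ?H0 a bb))) (at_right 0)"
    proof (rule det_tendsto, rule tendsto_sum)
      fix a bb t assume "t \<in> {..<s}"
      then have "t < n" using sn by simp
      then show "((\<lambda>e. Pf t e (y a) (y bb)) \<longlongrightarrow> dotn n (y a) (pf t) * dotn n (y bb) (pf t)) (at_right 0)"
        by (rule Pf_lim_right)
    qed
    show "((\<lambda>e. \<Prod>t<s. lam t e / e ^ (2 * t)) \<longlongrightarrow> (\<Prod>t<s. lt t)) (at_right 0)"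
    proof (rule tendsto_prod)
      fix t assume t: "t \<in> {..<s}"
      then have "eig_order r t = 2 * t" "t < n" using sr sn unfolding eig_order_def by auto
      then show "((\<lambda>e. lam t e / e ^ (2 * t)) \<longlongrightarrow> lt t) (at_right 0)" using lam_lim by metis
    qed
  qed
  have ev: "eventually (\<lambda>e. det (Matrix.mat s s (\<lambda>(a,bb). \<Sum>t<s. lam t e * Pf t e (y a) (y bb) / e ^ (a + bb))) =
      det (Matrix.mat s s (\<lambda>(a,bb). \<Sum>t<s. Pf t e (y a) (y bb))) * (\<Prod>t<s. lam t e / e ^ (2 * t))) (at_right 0)"
    using ev_small by (rule eventually_mono) (use core_det_identity[OF sn] in auto)
  have lim3: "((\<lambda>e. det (Matrix.mat s s (\<lambda>(a,bb). \<Sum>t<s. lam t e * Pf t e (y a) (y bb) / e ^ (a + bb))))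
      \<longlongrightarrow> det (Matrix.mat s s (\<lambda>(a,bb). ?H0 a bb)) * (\<Prod>t<s. lt t)) (at_right 0)"
    using lim2 ev by (simp add: tendsto_cong)
  have eqd: "det (Matrix.mat s s (\<lambda>(a,bb). ?W a bb)) = det (Matrix.mat s s (\<lambda>(a,bb). ?H0 a bb)) * (\<Prod>t<s. lt t)"
    using tendsto_unique[OF trivial_limit_at_right_real lim1 lim3] .
  have "det (Matrix.mat s s (\<lambda>(a,bb). ?W a bb)) =
      (\<Prod>a<s. ?rho a) * (\<Prod>t<s. ?rho t) * det (Matrix.mat s s (\<lambda>(a,bb). (-1) ^ bb * real ((a + bb) choose bb) * tcoef f (a + bb)))"
    by (rule det_scale_rows_cols)
  also have "Matrix.mat s s (\<lambda>(a,bb). (-1) ^ bb * real ((a + bb) choose bb) * tcoef f (a + bb)) = Wron f (s - 1)"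
    unfolding Wron_def using s1 by simp
  finally have "det (Matrix.mat s s (\<lambda>(a,bb). ?W a bb)) = (\<Prod>a<s. ?rho a) ^ 2 * det (Wron f (s - 1))"
    by (simp add: power2_eq_square)
  then show ?thesis using eqd by simp
qed

end

lemma dotn_comm: "dotn n u v = dotn n v u"
  unfolding dotn_def by (simp add: mult.commute)

lemma dotn_scale_right: "dotn n u (\<lambda>i. a * v i) = a * dotn n u v"
  unfolding dotn_def by (simp add: sum_distrib_left ac_simps)

lemma dotn_scale_left: "dotn n (\<lambda>i. a * v i) u = a * dotn n v u"
  unfolding dotn_def by (simp add: sum_distrib_left ac_simps)

lemma dotn_add_right: "dotn n u (\<lambda>i. v i + w i) = dotn n u v + dotn n u w"
  unfolding dotn_def by (simp add: sum.distrib distrib_left)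

lemma dotn_diff_right: "dotn n u (\<lambda>i. v i - w i) = dotn n u v - dotn n u w"
  unfolding dotn_def by (simp add: sum_subtractf right_diff_distrib)

lemma dotn_diff_left: "dotn n (\<lambda>i. v i - w i) u = dotn n v u - dotn n w u"
  unfolding dotn_def by (simp add: sum_subtractf left_diff_distrib)

lemma dotn_sum_right: "dotn n u (\<lambda>i. \<Sum>j\<in>J. c j * v j i) = (\<Sum>j\<in>J. c j * dotn n u (v j))"
proof -
  have "dotn n u (\<lambda>i. \<Sum>j\<in>J. c j * v j i) = (\<Sum>i<n. \<Sum>j\<in>J. c j * (u i * v j i))"
    unfolding dotn_def by (simp add: sum_distrib_left ac_simps)
  also have "\<dots> = (\<Sum>j\<in>J. \<Sum>i<n. c j * (u i * v j i))" by (rule sum.swap)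
  also have "\<dots> = (\<Sum>j\<in>J. c j * dotn n u (v j))" unfolding dotn_def by (simp add: sum_distrib_left)
  finally show ?thesis .
qed

lemma dotn_sum_left: "dotn n (\<lambda>i. \<Sum>j\<in>J. c j * v j i) u = (\<Sum>j\<in>J. c j * dotn n (v j) u)"
  using dotn_sum_right[where n=n and u=u and J=J and c=c and v=v] by (simp add: dotn_comm)

lemma dotn_self_nonneg: "dotn n u u \<ge> 0"
  unfolding dotn_def by (rule sum_nonneg) simp

lemma dotn_self_zero:
  assumes "dotn n u u = 0" "i < n"
  shows "u i = 0"
proof -
  have "\<forall>j\<in>{..<n}. u j * u j = 0"
    using assms(1) unfolding dotn_def by (subst sum_nonneg_eq_0_iff[symmetric]) auto
  then show ?thesis using assms(2) by simp
qed

lemma dotn_zero_left: "(\<And>i. i < n \<Longrightarrow> u i = 0) \<Longrightarrow> dotn n u v = 0"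
  unfolding dotn_def by simp

lemma dotn_cong: "(\<And>i. i < n \<Longrightarrow> u i = u' i) \<Longrightarrow> (\<And>i. i < n \<Longrightarrow> v i = v' i) \<Longrightarrow> dotn n u v = dotn n u' v'"
  unfolding dotn_def by simp

definition onz :: "nat \<Rightarrow> nat \<Rightarrow> (nat \<Rightarrow> nat \<Rightarrow> real) \<Rightarrow> bool" where
  "onz n s y \<longleftrightarrow> (\<forall>a<s. \<forall>bb<s. a \<noteq> bb \<longrightarrow> dotn n (y a) (y bb) = 0) \<and>
      (\<forall>a<s. dotn n (y a) (y a) = 0 \<or> dotn n (y a) (y a) = 1)"

lemma onz_zero_vec:
  assumes "onz n s y" "a < s" "dotn n (y a) (y a) \<noteq> 1" "i < n"
  shows "y a i = 0"
  using assms dotn_self_zero unfolding onz_def by blast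

lemma onz_proj:
  assumes "onz n s y" "a < s"
  shows "dotn n (y a) v - dotn n (y a) v * dotn n (y a) (y a) = 0"
proof (cases "dotn n (y a) (y a) = 1")
  case True then show ?thesis by simp
next
  case False
  then have "dotn n (y a) v = 0" using onz_zero_vec[OF assms False] by (intro dotn_zero_left) auto
  then show ?thesis by simp
qed


definition spanx :: "nat \<Rightarrow> (nat \<Rightarrow> real) \<Rightarrow> nat \<Rightarrow> (nat \<Rightarrow> nat \<Rightarrow> real) \<Rightarrow> bool" where
  "spanx n x s y \<longleftrightarrow> (\<forall>c<s. \<forall>i<n. x i ^ c = (\<Sum>j\<le>c. dotn n (y j) (\<lambda>i. x i ^ c) * y j i))"

definition gsnz :: "nat \<Rightarrow> (nat \<Rightarrow> real) \<Rightarrow> nat \<Rightarrow> (nat \<Rightarrow> nat \<Rightarrow> real) \<Rightarrow> bool" where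
  "gsnz n x s y \<longleftrightarrow> (\<forall>a<s. dotn n (y a) (y a) = 1 \<longrightarrow> dotn n (y a) (\<lambda>i. x i ^ a) \<noteq> 0)"

lemma gs_step:
  assumes on: "onz n s y" and sp: "spanx n x s y" and nz: "gsnz n x s y"
  shows "\<exists>y'. onz n (Suc s) y' \<and> spanx n x (Suc s) y' \<and> gsnz n x (Suc s) y'"
proof -
  define xs where "xs = (\<lambda>i. x i ^ s)"
  define w where "w = (\<lambda>i. xs i - (\<Sum>j<s. dotn n (y j) xs * y j i))"
  define nw where "nw = dotn n w w"
  define z where "z = (if nw = 0 then (\<lambda>i. 0) else (\<lambda>i. (1 / sqrt nw) * w i))"
  define y' where "y' = y(s := z)"
  have orth_w: "dotn n (y a) w = 0" if a: "a < s" for a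
  proof -
    have "dotn n (y a) w = dotn n (y a) xs - (\<Sum>j<s. dotn n (y j) xs * dotn n (y a) (y j))"
      unfolding w_def by (simp add: dotn_diff_right dotn_sum_right)
    also have "(\<Sum>j<s. dotn n (y j) xs * dotn n (y a) (y j)) = dotn n (y a) xs * dotn n (y a) (y a)"
    proof (rule sum_single)
      fix j assume "j \<in> {..<s}" "j \<noteq> a"
      then show "dotn n (y j) xs * dotn n (y a) (y j) = 0" using on a unfolding onz_def by auto
    qed (use a in auto)
    finally show ?thesis using onz_proj[OF on a, of xs] by simp
  qed
  have orth_z: "dotn n (y a) z = 0" if a: "a < s" for a
  proof (cases "nw = 0")
    case True then show ?thesis unfolding z_def by (simp add: dotn_def)
  next
    case False
    then have "z = (\<lambda>i. (1 / sqrt nw) * w i)" unfolding z_def by simp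
    then have "dotn n (y a) z = (1 / sqrt nw) * dotn n (y a) w" by (simp only: dotn_scale_right)
    then show ?thesis using orth_w[OF a] by simp
  qed
  have dwx: "dotn n w xs = nw"
  proof -
    have "dotn n w xs = dotn n w (\<lambda>i. w i + (\<Sum>j<s. dotn n (y j) xs * y j i))"
      by (rule dotn_cong) (auto simp: w_def)
    also have "\<dots> = nw + (\<Sum>j<s. dotn n (y j) xs * dotn n w (y j))"
      unfolding nw_def dotn_add_right dotn_sum_right ..
    also have "(\<Sum>j<s. dotn n (y j) xs * dotn n w (y j)) = 0"
      by (rule sum.neutral) (use orth_w in \<open>auto simp: dotn_comm\<close>)
    finally show ?thesis by simp
  qed
  have zz: "dotn n z z = 0 \<or> dotn n z z = 1"
  proof (cases "nw = 0")
    case True then show ?thesis unfolding z_def by (simp add: dotn_def)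
  next
    case False
    have nwp: "nw > 0" using False dotn_self_nonneg[of n w] unfolding nw_def by simp
    have zd: "z = (\<lambda>i. (1 / sqrt nw) * w i)" unfolding z_def using False by simp
    have "dotn n z z = (1 / sqrt nw) * ((1 / sqrt nw) * nw)"
      unfolding zd nw_def by (simp only: dotn_scale_right dotn_scale_left)
    also have "\<dots> = 1" using nwp by (simp add: field_simps)
    finally show ?thesis by simp
  qed
  have on': "onz n (Suc s) y'"
    unfolding onz_def
  proof (intro conjI allI impI)
    fix a bb assume a: "a < Suc s" and bb: "bb < Suc s" and ne: "a \<noteq> bb"
    show "dotn n (y' a) (y' bb) = 0"
    proof (cases "a = s")
      case True then have "bb < s" using bb ne by simp
      then show ?thesis using True ne orth_z[of bb] unfolding y'_def by (simp add: dotn_comm)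
    next
      case False
      then have as: "a < s" using a by simp
      show ?thesis
      proof (cases "bb = s")
        case True then show ?thesis using as orth_z[OF as] False unfolding y'_def by simp
      next
        case False2: False
        then have "bb < s" using bb by simp
        then show ?thesis using as ne on False False2 unfolding y'_def onz_def by simp
      qed
    qed
  next
    fix a assume a: "a < Suc s"
    show "dotn n (y' a) (y' a) = 0 \<or> dotn n (y' a) (y' a) = 1"
      using a on zz unfolding y'_def onz_def by (cases "a = s") auto
  qed
  have wz: "dotn n z xs * z i = w i" if i: "i < n" for i
  proof (cases "nw = 0")
    case True
    then have "w i = 0" using dotn_self_zero[of n w i] i unfolding nw_def by simp
    then show ?thesis using True unfolding z_def by simp
  next
    case False
    have nwp: "nw > 0" using False dotn_self_nonneg[of n w] unfolding nw_def by simp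
    have zd: "z = (\<lambda>i. (1 / sqrt nw) * w i)" unfolding z_def using False by simp
    have "dotn n z xs * z i = (1 / sqrt nw) * dotn n w xs * ((1 / sqrt nw) * w i)"
      unfolding zd by (simp only: dotn_scale_left)
    also have "\<dots> = w i" using nwp unfolding dwx by (simp add: field_simps)
    finally show ?thesis .
  qed
  have sp': "spanx n x (Suc s) y'"
    unfolding spanx_def
  proof (intro allI impI)
    fix c i assume c: "c < Suc s" and i: "i < n"
    show "x i ^ c = (\<Sum>j\<le>c. dotn n (y' j) (\<lambda>i. x i ^ c) * y' j i)"
    proof (cases "c = s")
      case False
      then have cs: "c < s" using c by simp
      have "(\<Sum>j\<le>c. dotn n (y' j) (\<lambda>i. x i ^ c) * y' j i) = (\<Sum>j\<le>c. dotn n (y j) (\<lambda>i. x i ^ c) * y j i)"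
        by (rule sum.cong) (use cs in \<open>auto simp: y'_def\<close>)
      then show ?thesis using sp cs i unfolding spanx_def by simp
    next
      case True
      have "(\<Sum>j\<le>c. dotn n (y' j) (\<lambda>i. x i ^ c) * y' j i) =
            (\<Sum>j<s. dotn n (y j) xs * y j i) + dotn n z xs * z i"
        unfolding True lessThan_Suc_atMost[symmetric] sum.lessThan_Suc
        by (simp add: y'_def xs_def)
      also have "\<dots> = x i ^ c" using wz[OF i] True unfolding w_def xs_def by simp
      finally show ?thesis by simp
    qed
  qed
  have nz': "gsnz n x (Suc s) y'"
    unfolding gsnz_def
  proof (intro allI impI)
    fix a assume a: "a < Suc s" and ya: "dotn n (y' a) (y' a) = 1"
    show "dotn n (y' a) (\<lambda>i. x i ^ a) \<noteq> 0"
    proof (cases "a = s")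
      case False
      then have "a < s" using a by simp
      then show ?thesis using nz ya False unfolding gsnz_def y'_def by simp
    next
      case True
      have "nw \<noteq> 0"
      proof
        assume "nw = 0"
        then have "dotn n z z = 0" unfolding z_def by (simp add: dotn_def)
        then show False using ya True unfolding y'_def by simp
      qed
      then have nwp: "nw > 0" using dotn_self_nonneg[of n w] unfolding nw_def by simp
      have zd: "z = (\<lambda>i. (1 / sqrt nw) * w i)" unfolding z_def using \<open>nw \<noteq> 0\<close> by simp
      have "dotn n z xs = (1 / sqrt nw) * dotn n w xs" unfolding zd by (simp only: dotn_scale_left)
      also have "\<dots> = (1 / sqrt nw) * nw" using dwx by simp
      finally have "dotn n z xs \<noteq> 0" using nwp by simp
      then show ?thesis using True unfolding y'_def xs_def by simp
    qed
  qed
  show ?thesis using on' sp' nz' by blast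
qed

lemma gs_exists: "\<exists>y. onz n s y \<and> spanx n x s y \<and> gsnz n x s y"
proof (induction s)
  case 0 then show ?case unfolding onz_def spanx_def gsnz_def by auto
next
  case (Suc s)
  then obtain y where "onz n s y" "spanx n x s y" "gsnz n x s y" by blast
  then show ?case by (rule gs_step)
qed

lemma onz_mono: "onz n s y \<Longrightarrow> s' \<le> s \<Longrightarrow> onz n s' y"
  unfolding onz_def by auto

lemma spanx_mono: "spanx n x s y \<Longrightarrow> s' \<le> s \<Longrightarrow> spanx n x s' y"
  unfolding spanx_def by auto

lemma onz_spanx_expand:
  assumes sp: "spanx n x s y" and c: "c < s"
  shows "dotn n v (\<lambda>i. x i ^ c) = (\<Sum>j\<le>c. dotn n (y j) (\<lambda>i. x i ^ c) * dotn n v (y j))"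
proof -
  have "dotn n v (\<lambda>i. x i ^ c) = dotn n v (\<lambda>i. \<Sum>j\<le>c. dotn n (y j) (\<lambda>i. x i ^ c) * y j i)"
    by (rule dotn_cong) (use sp c in \<open>auto simp: spanx_def\<close>)
  then show ?thesis by (simp add: dotn_sum_right)
qed

lemma onz_tri:
  assumes on: "onz n s y" and sp: "spanx n x s y" and a: "a < s" and c: "c < a"
  shows "dotn n (y a) (\<lambda>i. x i ^ c) = 0"
proof -
  have cs: "c < s" using a c by simp
  have "dotn n (y a) (\<lambda>i. x i ^ c) = (\<Sum>j\<le>c. dotn n (y j) (\<lambda>i. x i ^ c) * dotn n (y a) (y j))"
    by (rule onz_spanx_expand[OF sp cs])
  also have "\<dots> = 0"
  proof (rule sum.neutral, intro ballI)
    fix j assume "j \<in> {..c}"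
    then have "j < s" "j \<noteq> a" using c cs by auto
    then show "dotn n (y j) (\<lambda>i. x i ^ c) * dotn n (y a) (y j) = 0" using on a unfolding onz_def by auto
  qed
  finally show ?thesis .
qed

lemma gram_det:
  assumes on: "onz n s y" and sp: "spanx n x s y" and s1: "1 \<le> s"
  shows "det (transpose_mat (Vand n x (s - 1)) * Vand n x (s - 1)) = (\<Prod>a<s. dotn n (y a) (\<lambda>i. x i ^ a)) ^ 2"
proof -
  let ?L = "\<lambda>j c. dotn n (y j) (\<lambda>i. x i ^ c)"
  have ss: "s - 1 + 1 = s" using s1 by simp
  have A: "transpose_mat (Vand n x (s - 1)) * Vand n x (s - 1) = Matrix.mat s s (\<lambda>(c,d). dotn n (\<lambda>i. x i ^ c) (\<lambda>i. x i ^ d))"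
  proof (rule eq_matI)
    fix c d assume "c < dim_row (Matrix.mat s s (\<lambda>(c,d). dotn n (\<lambda>i. x i ^ c) (\<lambda>i. x i ^ d)))"
      "d < dim_col (Matrix.mat s s (\<lambda>(c,d). dotn n (\<lambda>i. x i ^ c) (\<lambda>i. x i ^ d)))"
    then have c: "c < s" and d: "d < s" by auto
    show "(transpose_mat (Vand n x (s - 1)) * Vand n x (s - 1)) $$ (c, d) =
          Matrix.mat s s (\<lambda>(c,d). dotn n (\<lambda>i. x i ^ c) (\<lambda>i. x i ^ d)) $$ (c, d)"
      using c d ss by (simp add: Vand_def scalar_prod_def dotn_def atLeast0LessThan)
  qed (use s1 in \<open>simp_all add: Vand_def\<close>)
  have B: "dotn n (\<lambda>i. x i ^ c) (\<lambda>i. x i ^ d) = (\<Sum>t<s. ?L t c * 1 * ?L t d)" if c: "c < s" and d: "d < s" for c d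
  proof -
    have "dotn n (\<lambda>i. x i ^ d) (\<lambda>i. x i ^ c) = (\<Sum>j\<le>c. ?L j c * dotn n (\<lambda>i. x i ^ d) (y j))"
      by (rule onz_spanx_expand[OF sp c])
    also have "\<dots> = (\<Sum>j<s. ?L j c * dotn n (\<lambda>i. x i ^ d) (y j))"
    proof (rule sum.mono_neutral_left)
      show "{..c} \<subseteq> {..<s}" using c by auto
      show "\<forall>j\<in>{..<s} - {..c}. ?L j c * dotn n (\<lambda>i. x i ^ d) (y j) = 0"
        using onz_tri[OF on sp] by auto
    qed auto
    finally show ?thesis by (simp add: dotn_comm)
  qed
  have C: "Matrix.mat s s (\<lambda>(c,d). dotn n (\<lambda>i. x i ^ c) (\<lambda>i. x i ^ d)) = Matrix.mat s s (\<lambda>(c,d). \<Sum>t<s. ?L t c * 1 * ?L t d)"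
    by (rule mat_eqI2) (rule B)
  have D: "det (Matrix.mat s s (\<lambda>(c,t). ?L t c)) = (\<Prod>a<s. ?L a a)"
  proof -
    have tr: "Matrix.mat s s (\<lambda>(c,t). ?L t c) = transpose_mat (Matrix.mat s s (\<lambda>(t,c). ?L t c))"
      by (rule eq_matI) auto
    have ut: "upper_triangular (Matrix.mat s s (\<lambda>(t,c). ?L t c))"
      unfolding upper_triangular_def using onz_tri[OF on sp] by auto
    have "det (Matrix.mat s s (\<lambda>(t,c). ?L t c)) = prod_list (diag_mat (Matrix.mat s s (\<lambda>(t,c). ?L t c)))"
      by (rule det_upper_triangular[OF ut, where n=s]) simp
    also have "\<dots> = (\<Prod>a<s. ?L a a)" unfolding prod_list_diag_prod by (simp add: atLeast0LessThan)
    moreover have "det (transpose_mat (Matrix.mat s s (\<lambda>(t,c). ?L t c))) = det (Matrix.mat s s (\<lambda>(t,c). ?L t c))"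
      by (rule det_transpose[where n=s]) simp
    ultimately show ?thesis unfolding tr by simp
  qed
  show ?thesis unfolding A C det_gram_diag[of s "\<lambda>c t. ?L t c" "\<lambda>_. 1"] D by simp
qed

context thm45
begin

lemma align:
  assumes sr: "s \<le> r" and on: "onz n s y" and sp: "spanx n x s y"
    and pos: "\<And>t. t < s \<Longrightarrow> lt t > 0"
  shows "t < s \<Longrightarrow> dotn n (y t) (y t) = 1 \<and> (\<exists>\<sigma>. \<sigma>^2 = 1 \<and> (\<forall>i<n. pf t i = \<sigma> * y t i))"
proof (induction t rule: less_induct)
  case (less t)
  have ts: "t < s" by fact
  have tr: "t < r" and tn: "t < n" using ts sr r_le_n by auto
  define c where "c j = dotn n (y j) (pf t)" for j
  define u where "u = (\<lambda>i. pf t i - (\<Sum>j\<le>t. c j * y j i))"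
  have u1: "dotn n u (xp cc) = 0" if cc: "cc \<le> t" for cc
  proof -
    have ccs: "cc < s" using cc ts by simp
    have "dotn n u (xp cc) = dotn n (pf t) (xp cc) - (\<Sum>j\<le>t. c j * dotn n (y j) (xp cc))"
      unfolding u_def by (simp add: dotn_diff_left dotn_sum_left)
    also have "dotn n (pf t) (xp cc) = (\<Sum>j\<le>cc. dotn n (y j) (xp cc) * dotn n (pf t) (y j))"
      unfolding xp_def by (rule onz_spanx_expand[OF sp ccs])
    also have "(\<Sum>j\<le>t. c j * dotn n (y j) (xp cc)) = (\<Sum>j\<le>cc. c j * dotn n (y j) (xp cc))"
    proof (rule sum.mono_neutral_right)
      show "{..cc} \<subseteq> {..t}" using cc by auto
      show "\<forall>j\<in>{..t} - {..cc}. c j * dotn n (y j) (xp cc) = 0"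
        using onz_tri[OF on sp] ts unfolding xp_def by auto
    qed auto
    finally show ?thesis unfolding c_def by (simp add: dotn_comm mult.commute)
  qed
  have u2: "dotn n u (pf t) = 0"
    by (rule span_zero[OF tr pos[OF ts] u1]) auto
  have u3: "dotn n u (y j) = 0" if j: "j \<le> t" for j
  proof -
    have js: "j < s" using j ts by simp
    have "dotn n u (y j) = dotn n (pf t) (y j) - (\<Sum>k\<le>t. c k * dotn n (y k) (y j))"
      unfolding u_def by (simp add: dotn_diff_left dotn_sum_left)
    also have "(\<Sum>k\<le>t. c k * dotn n (y k) (y j)) = c j * dotn n (y j) (y j)"
    proof (rule sum_single)
      fix k assume "k \<in> {..t}" "k \<noteq> j"
      then show "c k * dotn n (y k) (y j) = 0" using on js ts unfolding onz_def by auto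
    qed (use j in auto)
    finally show ?thesis using onz_proj[OF on js, of "pf t"] unfolding c_def by (simp add: dotn_comm)
  qed
  have "dotn n u u = dotn n u (pf t) - (\<Sum>j\<le>t. c j * dotn n u (y j))"
    by (subst (2) u_def) (simp add: dotn_diff_right dotn_sum_right)
  then have "dotn n u u = 0" using u2 u3 by simp
  then have pexp: "pf t i = (\<Sum>j\<le>t. c j * y j i)" if "i < n" for i
    using dotn_self_zero[of n u i] that unfolding u_def by simp
  have cz: "c j = 0" if j: "j < t" for j
  proof -
    obtain \<sigma> where sg: "\<sigma>^2 = 1" "\<forall>i<n. pf j i = \<sigma> * y j i" using less.IH[OF j] j ts by auto
    have "\<forall>i<n. y j i = \<sigma> * pf j i"
    proof (intro allI impI)
      fix i assume "i < n"
      then have "\<sigma> * pf j i = \<sigma> * \<sigma> * y j i" using sg(2) by simp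
      also have "\<dots> = y j i" using sg(1) by (simp add: power2_eq_square)
      finally show "y j i = \<sigma> * pf j i" by simp
    qed
    then have "c j = dotn n (\<lambda>i. \<sigma> * pf j i) (pf t)" unfolding c_def by (intro dotn_cong) auto
    also have "\<dots> = \<sigma> * dotn n (pf j) (pf t)" by (rule dotn_scale_left)
    also have "dotn n (pf j) (pf t) = 0" using pf_orth[of j t] j tn by simp
    finally show ?thesis by simp
  qed
  have pt: "pf t i = c t * y t i" if "i < n" for i
  proof -
    have "(\<Sum>j\<le>t. c j * y j i) = c t * y t i"
      by (rule sum_single) (use cz in auto)
    then show ?thesis using pexp[OF that] by simp
  qed
  have "1 = dotn n (pf t) (pf t)" using pf_unit[OF tn] by simp
  also have "\<dots> = dotn n (\<lambda>i. c t * y t i) (\<lambda>i. c t * y t i)" by (rule dotn_cong) (use pt in auto)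
  also have "\<dots> = c t * (c t * dotn n (y t) (y t))" by (simp only: dotn_scale_left dotn_scale_right)
  finally have one: "1 = c t * (c t * dotn n (y t) (y t))" .
  have yy: "dotn n (y t) (y t) = 1"
    using on ts one unfolding onz_def by (metis mult_zero_right zero_neq_one)
  have "c t ^ 2 = 1" using one yy by (simp add: power2_eq_square)
  then show ?case using yy pt by blast
qed

lemma part1:
  assumes s1: "1 \<le> s" and sr: "s \<le> r"
  shows "(\<Prod>t<s. lt t) = det (transpose_mat (Vand n x (s - 1)) * Vand n x (s - 1)) * det (Wron f (s - 1))"
proof -
  have sn: "s \<le> n" using sr r_le_n by simp
  obtain y where on: "onz n s y" and sp: "spanx n x s y" using gs_exists by blast
  have tri: "\<And>a c. a < s \<Longrightarrow> c < a \<Longrightarrow> dotn n (y a) (xp c) = 0"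
    unfolding xp_def using onz_tri[OF on sp] by blast
  have E: "(\<Prod>a<s. dotn n (y a) (xp a)) ^ 2 * det (Wron f (s - 1)) =
         det (Matrix.mat s s (\<lambda>(a,bb). \<Sum>t<s. dotn n (y a) (pf t) * dotn n (y bb) (pf t))) * (\<Prod>t<s. lt t)"
    by (rule core[OF s1 sr tri])
  have G: "det (transpose_mat (Vand n x (s - 1)) * Vand n x (s - 1)) = (\<Prod>a<s. dotn n (y a) (xp a)) ^ 2"
    unfolding xp_def by (rule gram_det[OF on sp s1])
  show ?thesis
  proof (cases "(\<Prod>t<s. lt t) = 0")
    case True then show ?thesis using E G by simp
  next
    case False
    then have pos: "lt t > 0" if "t < s" for t
      using lt_nonneg[of t] that sn by (metis (no_types, lifting) finite_lessThan lessThan_iff less_eq_real_def less_le_trans prod_zero_iff)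
    have al: "dotn n (y t) (y t) = 1 \<and> (\<exists>\<sigma>. \<sigma>^2 = 1 \<and> (\<forall>i<n. pf t i = \<sigma> * y t i))" if "t < s" for t
      by (rule align[OF sr on sp pos that])
    have H: "Matrix.mat s s (\<lambda>(a,bb). \<Sum>t<s. dotn n (y a) (pf t) * dotn n (y bb) (pf t)) =
             Matrix.mat s s (\<lambda>(a,bb). if a = bb then 1 else 0)"
    proof (rule mat_eqI2)
      fix a bb assume a: "a < s" and bb: "bb < s"
      have dy: "dotn n (y a) (pf t) = (if a = t then (SOME \<sigma>. \<sigma>^2 = 1 \<and> (\<forall>i<n. pf t i = \<sigma> * y t i)) else 0)"
        if a: "a < s" and t: "t < s" for a t
      proof -
        let ?\<sigma> = "SOME \<sigma>. \<sigma>^2 = 1 \<and> (\<forall>i<n. pf t i = \<sigma> * y t i)"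
        have sg: "?\<sigma>^2 = 1 \<and> (\<forall>i<n. pf t i = ?\<sigma> * y t i)" using al[OF t] by (rule someI_ex[OF conjunct2])
        have "dotn n (y a) (pf t) = dotn n (y a) (\<lambda>i. ?\<sigma> * y t i)" by (rule dotn_cong) (use sg in auto)
        also have "\<dots> = ?\<sigma> * dotn n (y a) (y t)" by (rule dotn_scale_right)
        also have "\<dots> = (if a = t then ?\<sigma> else 0)" using al[OF t] on a t unfolding onz_def by auto
        finally show ?thesis .
      qed
      have sq: "(SOME \<sigma>. \<sigma>^2 = 1 \<and> (\<forall>i<n. pf t i = \<sigma> * y t i))^2 = 1" if t: "t < s" for t
        using al[OF t] by (rule someI_ex[OF conjunct2, THEN conjunct1])
      show "(\<Sum>t<s. dotn n (y a) (pf t) * dotn n (y bb) (pf t)) = (if a = bb then 1 else 0)"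
      proof (cases "a = bb")
        case True
        have "(\<Sum>t<s. dotn n (y a) (pf t) * dotn n (y bb) (pf t)) = dotn n (y a) (pf a) * dotn n (y bb) (pf a)"
          by (rule sum_single) (use dy[OF a] a in auto)
        also have "\<dots> = 1" using dy[OF a a] sq[OF a] True by (simp add: power2_eq_square)
        finally show ?thesis using True by simp
      next
        case False
        have "(\<Sum>t<s. dotn n (y a) (pf t) * dotn n (y bb) (pf t)) = 0"
        proof (rule sum.neutral, intro ballI)
          fix t assume "t \<in> {..<s}"
          then have t: "t < s" by simp
          show "dotn n (y a) (pf t) * dotn n (y bb) (pf t) = 0"
          proof (cases "t = a")
            case True
            then have "dotn n (y bb) (pf t) = 0" using dy[OF bb t] False by simp
            then show ?thesis by simp
          next
            case False2: False
            then have "dotn n (y a) (pf t) = 0" using dy[OF a t] False2 by simp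
            then show ?thesis by simp
          qed
        qed
        then show ?thesis using False by simp
      qed
    qed
    have "det (Matrix.mat s s (\<lambda>(a,bb). \<Sum>t<s. dotn n (y a) (pf t) * dotn n (y bb) (pf t))) = 1"
      unfolding H using det_diag_fun[of s "\<lambda>_. 1::real"] by simp
    then show ?thesis using E G by simp
  qed
qed

end

context thm45
begin

lemma expand_p:
  assumes on: "onz n s y" and sp: "spanx n x s y" and Ts: "T < s" and Tr: "T < r"
    and pos: "lt T > 0" and j: "j \<le> T" and i: "i < n"
  shows "pf j i = (\<Sum>k\<le>T. dotn n (y k) (pf j) * y k i)"
proof -
  define c where "c k = dotn n (y k) (pf j)" for k
  define u where "u = (\<lambda>i. pf j i - (\<Sum>k\<le>T. c k * y k i))"
  have u1: "dotn n u (xp cc) = 0" if cc: "cc \<le> T" for cc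
  proof -
    have ccs: "cc < s" using cc Ts by simp
    have "dotn n u (xp cc) = dotn n (pf j) (xp cc) - (\<Sum>k\<le>T. c k * dotn n (y k) (xp cc))"
      unfolding u_def by (simp add: dotn_diff_left dotn_sum_left)
    also have "dotn n (pf j) (xp cc) = (\<Sum>k\<le>cc. dotn n (y k) (xp cc) * dotn n (pf j) (y k))"
      unfolding xp_def by (rule onz_spanx_expand[OF sp ccs])
    also have "(\<Sum>k\<le>T. c k * dotn n (y k) (xp cc)) = (\<Sum>k\<le>cc. c k * dotn n (y k) (xp cc))"
    proof (rule sum.mono_neutral_right)
      show "{..cc} \<subseteq> {..T}" using cc by auto
      show "\<forall>k\<in>{..T} - {..cc}. c k * dotn n (y k) (xp cc) = 0"
        using onz_tri[OF on sp] Ts unfolding xp_def by auto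
    qed auto
    finally show ?thesis unfolding c_def by (simp add: dotn_comm mult.commute)
  qed
  have u2: "dotn n u (pf j) = 0"
    by (rule span_zero[OF Tr pos u1 j])
  have u3: "dotn n u (y k) = 0" if k: "k \<le> T" for k
  proof -
    have ks: "k < s" using k Ts by simp
    have "dotn n u (y k) = dotn n (pf j) (y k) - (\<Sum>m\<le>T. c m * dotn n (y m) (y k))"
      unfolding u_def by (simp add: dotn_diff_left dotn_sum_left)
    also have "(\<Sum>m\<le>T. c m * dotn n (y m) (y k)) = c k * dotn n (y k) (y k)"
    proof (rule sum_single)
      fix m assume "m \<in> {..T}" "m \<noteq> k"
      then show "c m * dotn n (y m) (y k) = 0" using on ks Ts unfolding onz_def by auto
    qed (use k in auto)
    finally show ?thesis using onz_proj[OF on ks, of "pf j"] unfolding c_def by (simp add: dotn_comm)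
  qed
  have "dotn n u u = dotn n u (pf j) - (\<Sum>k\<le>T. c k * dotn n u (y k))"
    by (subst (2) u_def) (simp add: dotn_diff_right dotn_sum_right)
  then have "dotn n u u = 0" using u2 u3 by simp
  then show ?thesis using dotn_self_zero[of n u i] i unfolding u_def c_def by simp
qed

lemma det_pf_gram: "det (Matrix.mat s s (\<lambda>(j,l). dotn n (pf j) (pf l))) = 1" if "s \<le> n"
proof -
  have "Matrix.mat s s (\<lambda>(j,l). dotn n (pf j) (pf l)) = Matrix.mat s s (\<lambda>(j,l). if j = l then 1 else 0)"
    by (rule mat_eqI2) (use pf_unit pf_orth that in auto)
  then show ?thesis using det_diag_fun[of s "\<lambda>_. 1::real"] by simp
qed

lemma zero_lt:
  assumes sr: "s \<le> r" and s1: "1 \<le> s" and on: "onz n s y" and sp: "spanx n x s y"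
    and nz: "gsnz n x s y" and k: "k < s" and rho: "dotn n (y k) (xp k) = 0"
  shows "lt (s - 1) = 0"
proof (rule ccontr)
  assume "lt (s - 1) \<noteq> 0"
  have sn: "s \<le> n" using sr r_le_n by simp
  have "s - 1 < n" using sn s1 by simp
  then have pos: "lt (s - 1) > 0" using lt_nonneg[of "s - 1"] \<open>lt (s - 1) \<noteq> 0\<close> by simp
  define C where "C j m = dotn n (y m) (pf j)" for j m
  have T: "{..s - 1} = {..<s}" using s1 by auto
  have ex: "pf j i = (\<Sum>m<s. C j m * y m i)" if j: "j < s" and i: "i < n" for j i
    using expand_p[OF on sp _ _ pos _ i, of j] j s1 sr unfolding C_def T by simp
  have Cm: "C l m = C l m * dotn n (y m) (y m)" if l: "l < s" and m: "m < s" for l m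
  proof -
    have "C l m = dotn n (y m) (pf l)" by (simp add: C_def)
    also have "\<dots> = dotn n (y m) (\<lambda>i. \<Sum>m'<s. C l m' * y m' i)"
      by (rule dotn_cong) (use ex l in auto)
    also have "\<dots> = (\<Sum>m'<s. C l m' * dotn n (y m) (y m'))" by (rule dotn_sum_right)
    also have "\<dots> = C l m * dotn n (y m) (y m)"
    proof (rule sum_single)
      fix m' assume "m' \<in> {..<s}" "m' \<noteq> m"
      then show "C l m' * dotn n (y m) (y m') = 0" using on m unfolding onz_def by auto
    qed (use m in auto)
    finally show ?thesis .
  qed
  have G: "dotn n (pf j) (pf l) = (\<Sum>m<s. C j m * dotn n (y m) (y m) * C l m)" if j: "j < s" and l: "l < s" for j l
  proof -
    have "dotn n (pf j) (pf l) = dotn n (\<lambda>i. \<Sum>m<s. C j m * y m i) (pf l)"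
      by (rule dotn_cong) (use ex j in auto)
    also have "\<dots> = (\<Sum>m<s. C j m * C l m)" unfolding dotn_sum_left C_def ..
    also have "\<dots> = (\<Sum>m<s. C j m * dotn n (y m) (y m) * C l m)"
      by (rule sum.cong[OF refl]) (use Cm[OF l] in \<open>auto simp: ac_simps\<close>)
    finally show ?thesis .
  qed
  have "1 = det (Matrix.mat s s (\<lambda>(j,l). dotn n (pf j) (pf l)))" using det_pf_gram[OF sn] by simp
  also have "Matrix.mat s s (\<lambda>(j,l). dotn n (pf j) (pf l)) = Matrix.mat s s (\<lambda>(j,l). \<Sum>m<s. C j m * dotn n (y m) (y m) * C l m)"
    by (rule mat_eqI2) (rule G)
  also have "det \<dots> = det (Matrix.mat s s (\<lambda>(j,m). C j m)) ^ 2 * (\<Prod>m<s. dotn n (y m) (y m))"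
    by (rule det_gram_diag)
  finally have h1: "1 = det (Matrix.mat s s (\<lambda>(j,m). C j m)) ^ 2 * (\<Prod>m<s. dotn n (y m) (y m))" .
  have "(\<Prod>m<s. dotn n (y m) (y m)) \<noteq> 0"
  proof
    assume z: "(\<Prod>m<s. dotn n (y m) (y m)) = 0"
    have "(1::real) = det (Matrix.mat s s (\<lambda>(j,m). C j m)) ^ 2 * 0" using h1 unfolding z .
    then show False by simp
  qed
  then have "dotn n (y k) (y k) \<noteq> 0" using k by simp
  then have "dotn n (y k) (y k) = 1" using on k unfolding onz_def by auto
  then have "dotn n (y k) (xp k) \<noteq> 0" using nz k unfolding gsnz_def xp_def by auto
  then show False using rho by simp
qed

lemma part1b:
  assumes s1: "1 < s" and sr: "s \<le> r" and dW: "det (Wron f (s - 2)) \<noteq> 0"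
  shows "lt (s - 1) = det (transpose_mat (Vand n x (s - 1)) * Vand n x (s - 1))
                     / det (transpose_mat (Vand n x (s - 2)) * Vand n x (s - 2))
                   * (det (Wron f (s - 1)) / det (Wron f (s - 2)))"
proof -
  have P1: "(\<Prod>t<s. lt t) = det (transpose_mat (Vand n x (s - 1)) * Vand n x (s - 1)) * det (Wron f (s - 1))"
    using part1[of s] s1 sr by simp
  have P0: "(\<Prod>t<s - 1. lt t) = det (transpose_mat (Vand n x (s - 2)) * Vand n x (s - 2)) * det (Wron f (s - 2))"
  proof -
    have e: "s - 1 - 1 = s - 2" by simp
    have "(\<Prod>t<s - 1. lt t) = det (transpose_mat (Vand n x (s - 1 - 1)) * Vand n x (s - 1 - 1)) * det (Wron f (s - 1 - 1))"
      by (rule part1) (use s1 sr in auto)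
    then show ?thesis unfolding e .
  qed
  have split: "(\<Prod>t<s. lt t) = (\<Prod>t<s - 1. lt t) * lt (s - 1)"
  proof -
    have "s = Suc (s - 1)" using s1 by simp
    then show ?thesis by (metis prod.lessThan_Suc)
  qed
  show ?thesis
  proof (cases "det (transpose_mat (Vand n x (s - 2)) * Vand n x (s - 2)) = 0")
    case False
    have ne: "(\<Prod>t<s - 1. lt t) \<noteq> 0" using P0 False dW by simp
    have "lt (s - 1) = (\<Prod>t<s. lt t) / (\<Prod>t<s - 1. lt t)" using split ne by simp
    then show ?thesis unfolding P1 P0 using False dW by (simp add: field_simps)
  next
    case True
    obtain y where on: "onz n s y" and sp: "spanx n x s y" and nz: "gsnz n x s y" using gs_exists by blast
    have "det (transpose_mat (Vand n x (s - 1 - 1)) * Vand n x (s - 1 - 1)) = (\<Prod>a<s - 1. dotn n (y a) (\<lambda>i. x i ^ a)) ^ 2"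
      by (rule gram_det[OF onz_mono[OF on] spanx_mono[OF sp]]) (use s1 in auto)
    moreover have "s - 1 - 1 = s - 2" by simp
    ultimately have "(\<Prod>a<s - 1. dotn n (y a) (\<lambda>i. x i ^ a)) ^ 2 = 0" using True by simp
    then have "(\<Prod>a<s - 1. dotn n (y a) (\<lambda>i. x i ^ a)) = 0" by simp
    then obtain a where a: "a < s - 1" "dotn n (y a) (\<lambda>i. x i ^ a) = 0" by auto
    have "lt (s - 1) = 0"
      by (rule zero_lt[OF sr _ on sp nz, of a]) (use a s1 in \<open>auto simp: xp_def\<close>)
    then show ?thesis using True by simp
  qed
qed

end

lemma VtV_eq:
  assumes s1: "1 \<le> s"
  shows "transpose_mat (Vand n x (s - 1)) * Vand n x (s - 1) = Matrix.mat s s (\<lambda>(c,d). dotn n (\<lambda>i. x i ^ c) (\<lambda>i. x i ^ d))"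
proof (rule eq_matI)
  have ss: "s - 1 + 1 = s" using s1 by simp
  fix c d assume "c < dim_row (Matrix.mat s s (\<lambda>(c,d). dotn n (\<lambda>i. x i ^ c) (\<lambda>i. x i ^ d)))"
    "d < dim_col (Matrix.mat s s (\<lambda>(c,d). dotn n (\<lambda>i. x i ^ c) (\<lambda>i. x i ^ d)))"
  then have c: "c < s" and d: "d < s" by auto
  show "(transpose_mat (Vand n x (s - 1)) * Vand n x (s - 1)) $$ (c, d) =
        Matrix.mat s s (\<lambda>(c,d). dotn n (\<lambda>i. x i ^ c) (\<lambda>i. x i ^ d)) $$ (c, d)"
    using c d ss by (simp add: Vand_def scalar_prod_def dotn_def atLeast0LessThan)
qed (use s1 in \<open>simp_all add: Vand_def\<close>)

lemma vand_gram_nonzero: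
  assumes inj: "inj_on x {..<n}" and s1: "1 \<le> s" and sn: "s \<le> n"
  shows "det (transpose_mat (Vand n x (s - 1)) * Vand n x (s - 1)) \<noteq> 0"
proof
  let ?A = "Matrix.mat s s (\<lambda>(c,d). dotn n (\<lambda>i. x i ^ c) (\<lambda>i. x i ^ d))"
  assume "det (transpose_mat (Vand n x (s - 1)) * Vand n x (s - 1)) = 0"
  then have "det ?A = 0" unfolding VtV_eq[OF s1] .
  then obtain v where v: "v \<in> carrier_vec s" "v \<noteq> 0\<^sub>v s" "?A *\<^sub>v v = 0\<^sub>v s"
    using det_0_iff_vec_prod_zero_field[of ?A s] by auto
  define g where "g i = (\<Sum>c<s. vec_index v c * x i ^ c)" for i
  have "scalar_prod v (?A *\<^sub>v v) = 0" using v(1) v(3) by simp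
  moreover have "scalar_prod v (?A *\<^sub>v v) = dotn n g g"
  proof -
    have "scalar_prod v (?A *\<^sub>v v) = (\<Sum>c<s. vec_index v c * (\<Sum>d<s. dotn n (\<lambda>i. x i ^ c) (\<lambda>i. x i ^ d) * vec_index v d))"
      using v(1) by (simp add: scalar_prod_def atLeast0LessThan)
    also have "\<dots> = (\<Sum>c<s. vec_index v c * dotn n (\<lambda>i. x i ^ c) g)"
      unfolding g_def by (simp add: dotn_sum_right mult.commute)
    also have "\<dots> = dotn n g g"
      unfolding g_def[abs_def] by (simp add: dotn_sum_left dotn_comm)
    finally show ?thesis .
  qed
  ultimately have gz: "g i = 0" if "i < n" for i using dotn_self_zero[of n g i] that by simp
  define pp where "pp = (\<Sum>c<s. monom (vec_index v c) c)"
  have poly_pp: "poly pp z = (\<Sum>c<s. vec_index v c * z ^ c)" for z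
    unfolding pp_def by (simp add: poly_sum poly_monom)
  have "pp = 0"
  proof (rule ccontr)
    assume ne: "pp \<noteq> 0"
    have deg: "degree pp \<le> s - 1"
      unfolding pp_def by (rule degree_sum_le) (use degree_monom_le le_trans in \<open>auto intro: order.trans[OF degree_monom_le]\<close>)
    have sub: "x ` {..<n} \<subseteq> {z. poly pp z = 0}" using gz unfolding poly_pp g_def by auto
    have "n = card (x ` {..<n})" using inj by (simp add: card_image)
    also have "\<dots> \<le> card {z. poly pp z = 0}" by (rule card_mono[OF poly_roots_finite[OF ne] sub])
    also have "\<dots> \<le> degree pp" by (rule card_poly_roots_bound[OF ne])
    finally show False using deg s1 sn by linarith
  qed
  then have "vec_index v c = 0" if "c < s" for c
  proof -
    have "coeff pp c = vec_index v c" unfolding pp_def using that by (simp add: coeff_sum coeff_monom)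
    then show ?thesis using \<open>pp = 0\<close> by simp
  qed
  then have "v = 0\<^sub>v s" using v(1) by (intro eq_vecI) auto
  then show False using v(2) by simp
qed

lemma orthonormal_complete:
  assumes orth: "\<And>a bb. a < n \<Longrightarrow> bb < n \<Longrightarrow> dotn n (e a) (e bb) = (if a = bb then 1 else 0)"
    and i: "i < n" and j: "j < n"
  shows "(\<Sum>t<n. e t i * e t j) = (if i = j then 1 else (0::real))"
proof -
  let ?E = "Matrix.mat n n (\<lambda>(i,t). e t i)"
  have c: "?E \<in> carrier_mat n n" "transpose_mat ?E \<in> carrier_mat n n" by auto
  have "transpose_mat ?E * ?E = 1\<^sub>m n"
  proof (rule eq_matI)
    fix a bb assume "a < dim_row (1\<^sub>m n :: real mat)" "bb < dim_col (1\<^sub>m n :: real mat)"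
    then have a: "a < n" and bb: "bb < n" by auto
    have "(transpose_mat ?E * ?E) $$ (a,bb) = dotn n (e a) (e bb)"
      using a bb by (simp add: scalar_prod_def dotn_def atLeast0LessThan)
    then show "(transpose_mat ?E * ?E) $$ (a,bb) = 1\<^sub>m n $$ (a,bb)" using orth[OF a bb] a bb by simp
  qed auto
  then have "?E * transpose_mat ?E = 1\<^sub>m n" by (rule mat_mult_left_right_inverse[OF c(2) c(1)])
  then have "(?E * transpose_mat ?E) $$ (i,j) = (1\<^sub>m n :: real mat) $$ (i,j)" by simp
  then show ?thesis using i j by (simp add: scalar_prod_def atLeast0LessThan)
qed

lemma orthonormal_expand:
  assumes orth: "\<And>a bb. a < n \<Longrightarrow> bb < n \<Longrightarrow> dotn n (e a) (e bb) = (if a = bb then 1 else 0)"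
    and i: "i < n"
  shows "v i = (\<Sum>t<n. dotn n (e t) v * e t i)"
proof -
  have "(\<Sum>t<n. dotn n (e t) v * e t i) = (\<Sum>t<n. \<Sum>j<n. e t i * e t j * v j)"
    unfolding dotn_def sum_distrib_right by (intro sum.cong refl) (simp add: ac_simps)
  also have "\<dots> = (\<Sum>j<n. \<Sum>t<n. e t i * e t j * v j)" by (rule sum.swap)
  also have "\<dots> = (\<Sum>j<n. (if i = j then 1 else 0) * v j)"
    by (intro sum.cong refl) (simp add: sum_distrib_right[symmetric] orthonormal_complete[OF orth i])
  also have "\<dots> = v i" using sum_delta_left[OF i, of "\<lambda>_. 1" v] by simp
  finally show ?thesis by simp
qed

lemma qr_facts:
  assumes qr: "full_QR (Vand n x (s - 1)) Q" and s1: "1 \<le> s" and sn: "s \<le> n"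
  shows "Q \<in> carrier_mat n n"
    and "\<And>a bb. a < n \<Longrightarrow> bb < n \<Longrightarrow> dotn n (\<lambda>i. Q $$ (i,a)) (\<lambda>i. Q $$ (i,bb)) = (if a = bb then 1 else 0)"
    and "spanx n x s (\<lambda>k i. Q $$ (i,k))"
proof -
  have ss: "s - 1 + 1 = s" using s1 by simp
  have dims: "dim_row (Vand n x (s - 1)) = n" "dim_col (Vand n x (s - 1)) = s" unfolding Vand_def using ss by auto
  obtain R where Q: "Q \<in> carrier_mat n n" and QQ: "transpose_mat Q * Q = 1\<^sub>m n"
    and R: "R \<in> carrier_mat s s" and ut: "upper_triangular R"
    and VQ: "Vand n x (s - 1) = Q * Matrix.mat n s (\<lambda>(i,j). if i < s then R $$ (i,j) else 0)"
    using qr unfolding full_QR_def Let_def dims by blast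
  show "Q \<in> carrier_mat n n" by (rule Q)
  let ?q = "\<lambda>k i. Q $$ (i,k)"
  have orth: "dotn n (?q a) (?q bb) = (if a = bb then 1 else 0)" if a: "a < n" and bb: "bb < n" for a bb
  proof -
    have "(transpose_mat Q * Q) $$ (a,bb) = dotn n (?q a) (?q bb)"
      using Q a bb by (simp add: scalar_prod_def dotn_def atLeast0LessThan)
    then show ?thesis using QQ a bb by simp
  qed
  then show "\<And>a bb. a < n \<Longrightarrow> bb < n \<Longrightarrow> dotn n (?q a) (?q bb) = (if a = bb then 1 else 0)" by blast
  have xc: "x i ^ c = (\<Sum>k\<le>c. R $$ (k,c) * ?q k i)" if c: "c < s" and i: "i < n" for c i
  proof -
    have "x i ^ c = Vand n x (s - 1) $$ (i,c)" using c i ss by (simp add: Vand_def)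
    also have "\<dots> = (\<Sum>k<n. Q $$ (i,k) * (if k < s then R $$ (k,c) else 0))"
      unfolding VQ using Q c i by (simp add: scalar_prod_def atLeast0LessThan)
    also have "\<dots> = (\<Sum>k<s. Q $$ (i,k) * R $$ (k,c))"
    proof -
      have "(\<Sum>k<n. Q $$ (i,k) * (if k < s then R $$ (k,c) else 0)) = (\<Sum>k<s. Q $$ (i,k) * (if k < s then R $$ (k,c) else 0))"
        by (rule sum.mono_neutral_right) (use sn in auto)
      then show ?thesis by simp
    qed
    also have "\<dots> = (\<Sum>k\<le>c. Q $$ (i,k) * R $$ (k,c))"
    proof (rule sum.mono_neutral_right)
      show "{..c} \<subseteq> {..<s}" using c by auto
      show "\<forall>k\<in>{..<s} - {..c}. Q $$ (i,k) * R $$ (k,c) = 0"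
        using ut R unfolding upper_triangular_def by auto
    qed auto
    finally show ?thesis by (simp add: mult.commute)
  qed
  have Rc: "R $$ (k,c) = dotn n (?q k) (\<lambda>i. x i ^ c)" if c: "c < s" and k: "k \<le> c" for k c
  proof -
    have kn: "k < n" using k c sn by simp
    have "dotn n (?q k) (\<lambda>i. x i ^ c) = dotn n (?q k) (\<lambda>i. \<Sum>k'\<le>c. R $$ (k',c) * ?q k' i)"
      by (rule dotn_cong) (use xc c in auto)
    also have "\<dots> = (\<Sum>k'\<le>c. R $$ (k',c) * dotn n (?q k) (?q k'))" by (rule dotn_sum_right)
    also have "\<dots> = R $$ (k,c) * dotn n (?q k) (?q k)"
    proof (rule sum_single)
      fix k' assume "k' \<in> {..c}" "k' \<noteq> k"
      then show "R $$ (k',c) * dotn n (?q k) (?q k') = 0" using orth[OF kn] c sn by auto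
    qed (use k in auto)
    also have "\<dots> = R $$ (k,c)" using orth[OF kn kn] by simp
    finally show ?thesis by simp
  qed
  show "spanx n x s ?q"
    unfolding spanx_def
  proof (intro allI impI)
    fix c i assume c: "c < s" and i: "i < n"
    have "x i ^ c = (\<Sum>k\<le>c. R $$ (k,c) * ?q k i)" by (rule xc[OF c i])
    also have "\<dots> = (\<Sum>k\<le>c. dotn n (?q k) (\<lambda>i. x i ^ c) * ?q k i)"
      by (rule sum.cong[OF refl]) (use Rc c in auto)
    finally show "x i ^ c = (\<Sum>k\<le>c. dotn n (?q k) (\<lambda>i. x i ^ c) * ?q k i)" .
  qed
qed

lemma qr_onz:
  assumes "\<And>a bb. a < n \<Longrightarrow> bb < n \<Longrightarrow> dotn n (q a) (q bb) = (if a = bb then 1 else 0)" and "s \<le> n"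
  shows "onz n s q"
  unfolding onz_def using assms by auto

context thm45
begin

lemma lt_pos_all:
  assumes inj: "inj_on x {..<n}" and s1: "1 \<le> s" and sr: "s \<le> r" and dW: "det (Wron f (s - 1)) \<noteq> 0"
    and t: "t < s"
  shows "lt t > 0"
proof -
  have sn: "s \<le> n" using sr r_le_n by simp
  have "(\<Prod>t<s. lt t) \<noteq> 0" using part1[OF s1 sr] vand_gram_nonzero[OF inj s1 sn] dW by simp
  then have "lt t \<noteq> 0" using t by simp
  then show ?thesis using lt_nonneg[of t] t sn by simp
qed

lemma part2_sigma:
  assumes inj: "inj_on x {..<n}" and s1: "1 \<le> s" and sr: "s \<le> r" and dW: "det (Wron f (s - 1)) \<noteq> 0"
    and qr: "full_QR (Vand n x (s - 1)) Q" and k: "k < s"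
  shows "\<exists>\<sigma>. (\<sigma> = 1 \<or> \<sigma> = -1) \<and> (\<forall>i<n. pf k i = \<sigma> * Q $$ (i,k))"
proof -
  have sn: "s \<le> n" using sr r_le_n by simp
  have on: "onz n s (\<lambda>k i. Q $$ (i,k))" by (rule qr_onz[OF qr_facts(2)[OF qr s1 sn] sn])
  have sp: "spanx n x s (\<lambda>k i. Q $$ (i,k))" by (rule qr_facts(3)[OF qr s1 sn])
  obtain \<sigma> where sg: "\<sigma>^2 = 1" "\<forall>i<n. pf k i = \<sigma> * Q $$ (i,k)"
    using align[OF sr on sp lt_pos_all[OF inj s1 sr dW] k] by auto
  have "\<sigma> = 1 \<or> \<sigma> = -1" using sg(1) by (simp add: power2_eq_1_iff)
  then show ?thesis using sg(2) by blast
qed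

lemma part2:
  assumes inj: "inj_on x {..<n}" and s1: "1 \<le> s" and sr: "s \<le> r" and dW: "det (Wron f (s - 1)) \<noteq> 0"
    and qr: "full_QR (Vand n x (s - 1)) Q" and k: "k < s"
  shows "p k = col Q k \<or> p k = - col Q k"
proof -
  have sn: "s \<le> n" using sr r_le_n by simp
  have kn: "k < n" using k sn by simp
  have Q: "Q \<in> carrier_mat n n" by (rule qr_facts(1)[OF qr s1 sn])
  have pk: "p k \<in> carrier_vec n" using p_unit[OF kn] by simp
  obtain \<sigma> where sg: "\<sigma> = 1 \<or> \<sigma> = -1" "\<forall>i<n. pf k i = \<sigma> * Q $$ (i,k)"
    using part2_sigma[OF inj s1 sr dW qr k] by blast
  from sg(1) show ?thesis
  proof
    assume "\<sigma> = 1"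
    then have "p k = col Q k" using pk Q kn sg(2) by (intro eq_vecI) (auto simp: pf_def)
    then show ?thesis by simp
  next
    assume "\<sigma> = -1"
    then have "p k = - col Q k" using pk Q kn sg(2) by (intro eq_vecI) (auto simp: pf_def)
    then show ?thesis by simp
  qed
qed

end

lemma sum_shift_r:
  fixes r n :: nat
  assumes "r \<le> n"
  shows "(\<Sum>k\<in>{r..<n}. F k) = (\<Sum>j<n - r. (F (r + j) :: 'a::comm_monoid_add))"
proof -
  have "(\<Sum>k\<in>{0 + r..<(n - r) + r}. F k) = (\<Sum>j\<in>{0..<n - r}. F (j + r))"
    by (rule sum.shift_bounds_nat_ivl)
  then show ?thesis using assms by (simp add: atLeast0LessThan add.commute)
qed

lemma mult_mat_vec_sum:
  assumes "M \<in> carrier_mat nr nc" "v \<in> carrier_vec nc" "i < nr"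
  shows "(M *\<^sub>v v) $ i = (\<Sum>k<nc. M $$ (i,k) * v $ k)"
  using assms by (simp add: scalar_prod_def atLeast0LessThan)

context thm45
begin

lemma rset_facts:
  assumes inj: "inj_on x {..<n}" and dW: "det (Wron f (r - 1)) \<noteq> 0"
    and qr: "full_QR (Vand n x (r - 1)) Q"
  shows "\<And>a bb. a < n \<Longrightarrow> bb < n \<Longrightarrow> dotn n (\<lambda>i. Q $$ (i,a)) (\<lambda>i. Q $$ (i,bb)) = (if a = bb then 1 else 0)"
    and "\<And>a bb. a < n \<Longrightarrow> bb < n \<Longrightarrow> dotn n (pf a) (pf bb) = (if a = bb then 1 else 0)"
    and "\<And>k t. k < r \<Longrightarrow> r \<le> t \<Longrightarrow> t < n \<Longrightarrow> dotn n (\<lambda>i. Q $$ (i,k)) (pf t) = 0"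
    and "\<And>k t. k < r \<Longrightarrow> r \<le> t \<Longrightarrow> t < n \<Longrightarrow> dotn n (pf k) (\<lambda>i. Q $$ (i,t)) = 0"
    and "Q \<in> carrier_mat n n"
proof -
  have r1: "1 \<le> r" by (rule r_ge1)
  note qf = qr_facts[OF qr r1 r_le_n]
  show Q: "Q \<in> carrier_mat n n" by (rule qf(1))
  show qo: "\<And>a bb. a < n \<Longrightarrow> bb < n \<Longrightarrow> dotn n (\<lambda>i. Q $$ (i,a)) (\<lambda>i. Q $$ (i,bb)) = (if a = bb then 1 else 0)"
    by (rule qf(2))
  show po: "\<And>a bb. a < n \<Longrightarrow> bb < n \<Longrightarrow> dotn n (pf a) (pf bb) = (if a = bb then 1 else 0)"
    using pf_unit pf_orth by auto
  have sig: "\<exists>\<sigma>. (\<sigma> = 1 \<or> \<sigma> = -1) \<and> (\<forall>i<n. pf k i = \<sigma> * Q $$ (i,k))" if "k < r" for k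
    by (rule part2_sigma[OF inj r1 order_refl dW qr that])
  show "\<And>k t. k < r \<Longrightarrow> r \<le> t \<Longrightarrow> t < n \<Longrightarrow> dotn n (\<lambda>i. Q $$ (i,k)) (pf t) = 0"
  proof -
    fix k t assume k: "k < r" and t: "r \<le> t" "t < n"
    obtain \<sigma> where sg: "\<sigma> = 1 \<or> \<sigma> = -1" "\<forall>i<n. pf k i = \<sigma> * Q $$ (i,k)" using sig[OF k] by blast
    have "\<forall>i<n. Q $$ (i,k) = \<sigma> * pf k i" using sg by auto
    then have "dotn n (\<lambda>i. Q $$ (i,k)) (pf t) = dotn n (\<lambda>i. \<sigma> * pf k i) (pf t)" by (intro dotn_cong) auto
    also have "\<dots> = \<sigma> * dotn n (pf k) (pf t)" by (rule dotn_scale_left)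
    also have "dotn n (pf k) (pf t) = 0" using po[of k t] k t r_le_n by simp
    finally show "dotn n (\<lambda>i. Q $$ (i,k)) (pf t) = 0" by simp
  qed
  show "\<And>k t. k < r \<Longrightarrow> r \<le> t \<Longrightarrow> t < n \<Longrightarrow> dotn n (pf k) (\<lambda>i. Q $$ (i,t)) = 0"
  proof -
    fix k t assume k: "k < r" and t: "r \<le> t" "t < n"
    obtain \<sigma> where sg: "\<sigma> = 1 \<or> \<sigma> = -1" "\<forall>i<n. pf k i = \<sigma> * Q $$ (i,k)" using sig[OF k] by blast
    have "dotn n (pf k) (\<lambda>i. Q $$ (i,t)) = dotn n (\<lambda>i. \<sigma> * Q $$ (i,k)) (\<lambda>i. Q $$ (i,t))"
      using sg by (intro dotn_cong) auto
    also have "\<dots> = \<sigma> * dotn n (\<lambda>i. Q $$ (i,k)) (\<lambda>i. Q $$ (i,t))" by (rule dotn_scale_left)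
    also have "dotn n (\<lambda>i. Q $$ (i,k)) (\<lambda>i. Q $$ (i,t)) = 0" using qo[of k t] k t r_le_n by simp
    finally show "dotn n (pf k) (\<lambda>i. Q $$ (i,t)) = 0" by simp
  qed
qed

lemma part2b:
  assumes inj: "inj_on x {..<n}" and dW: "det (Wron f (r - 1)) \<noteq> 0"
    and qr: "full_QR (Vand n x (r - 1)) Q"
  shows "col_space (mat_of_cols n (map p [r..<n])) = col_space (last_cols r Q)"
proof -
  note F = rset_facts[OF inj dW qr]
  have Q: "Q \<in> carrier_mat n n" by (rule F(5))
  let ?A = "mat_of_cols n (map p [r..<n])"
  let ?B = "last_cols r Q"
  let ?q = "\<lambda>k i. Q $$ (i,k)"
  have A: "?A \<in> carrier_mat n (n - r)" by (simp add: mat_of_cols_def)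
  have B: "?B \<in> carrier_mat n (n - r)" using Q by (simp add: last_cols_def)
  have Ai: "?A $$ (i,m) = pf (r + m) i" if "i < n" "m < n - r" for i m
    using that by (simp add: mat_of_cols_def pf_def)
  have Bi: "?B $$ (i,j) = Q $$ (i, r + j)" if "i < n" "j < n - r" for i j
    using that Q by (simp add: last_cols_def)
  have rn: "r \<le> n" by (rule r_le_n)
  show ?thesis
  proof
    show "col_space ?A \<subseteq> col_space ?B"
    proof
      fix v assume "v \<in> col_space ?A"
      then obtain yv where yv: "yv \<in> carrier_vec (n - r)" and v: "v = ?A *\<^sub>v yv"
        unfolding col_space_def using A by auto
      define g where "g i = (\<Sum>m<n - r. vec_index yv m * pf (r + m) i)" for i
      have vg: "vec_index v i = g i" if "i < n" for i
        unfolding v g_def using mult_mat_vec_sum[OF A yv that] Ai that by (simp add: mult.commute)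
      define zv where "zv = Matrix.vec (n - r) (\<lambda>j. dotn n (?q (r + j)) g)"
      have zv: "zv \<in> carrier_vec (n - r)" unfolding zv_def by simp
      have "?B *\<^sub>v zv = v"
      proof (rule eq_vecI)
        show "dim_vec (?B *\<^sub>v zv) = dim_vec v" using B A v by simp
        fix i assume "i < dim_vec v"
        then have i: "i < n" using v A by simp
        have "(?B *\<^sub>v zv) $ i = (\<Sum>j<n - r. Q $$ (i, r + j) * dotn n (?q (r + j)) g)"
          using mult_mat_vec_sum[OF B zv i] Bi i by (simp add: zv_def)
        also have "\<dots> = (\<Sum>k<n. dotn n (?q k) g * ?q k i)"
        proof -
          have z: "(\<Sum>k<r. dotn n (?q k) g * ?q k i) = 0"
          proof (rule sum.neutral, intro ballI)
            fix k assume "k \<in> {..<r}"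
            then have k: "k < r" by simp
            have "dotn n (?q k) g = (\<Sum>m<n - r. vec_index yv m * dotn n (?q k) (pf (r + m)))"
              unfolding g_def[abs_def] by (rule dotn_sum_right)
            also have "\<dots> = 0" using F(3)[OF k] by (intro sum.neutral) auto
            finally show "dotn n (?q k) g * ?q k i = 0" by simp
          qed
          have "(\<Sum>k<n. dotn n (?q k) g * ?q k i) = (\<Sum>j<n - r. dotn n (?q (r + j)) g * ?q (r + j) i)"
            using sum_split_at[OF rn] z sum_shift_r[OF rn] by simp
          then show ?thesis by (simp add: mult.commute)
        qed
        also have "\<dots> = g i" by (rule orthonormal_expand[OF F(1) i, symmetric])
        finally show "(?B *\<^sub>v zv) $ i = v $ i" using vg[OF i] by simp
      qed
      then show "v \<in> col_space ?B" unfolding col_space_def using zv B by auto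
    qed
  next
    show "col_space ?B \<subseteq> col_space ?A"
    proof
      fix v assume "v \<in> col_space ?B"
      then obtain zv where zv: "zv \<in> carrier_vec (n - r)" and v: "v = ?B *\<^sub>v zv"
        unfolding col_space_def using B by auto
      define g where "g i = (\<Sum>j<n - r. vec_index zv j * ?q (r + j) i)" for i
      have vg: "vec_index v i = g i" if "i < n" for i
        unfolding v g_def using mult_mat_vec_sum[OF B zv that] Bi that by (simp add: mult.commute)
      define yv where "yv = Matrix.vec (n - r) (\<lambda>m. dotn n (pf (r + m)) g)"
      have yv: "yv \<in> carrier_vec (n - r)" unfolding yv_def by simp
      have "?A *\<^sub>v yv = v"
      proof (rule eq_vecI)
        show "dim_vec (?A *\<^sub>v yv) = dim_vec v" using B A v by simp
        fix i assume "i < dim_vec v"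
        then have i: "i < n" using v B by simp
        have "(?A *\<^sub>v yv) $ i = (\<Sum>m<n - r. pf (r + m) i * dotn n (pf (r + m)) g)"
          using mult_mat_vec_sum[OF A yv i] Ai i by (simp add: yv_def)
        also have "\<dots> = (\<Sum>t<n. dotn n (pf t) g * pf t i)"
        proof -
          have z: "(\<Sum>t<r. dotn n (pf t) g * pf t i) = 0"
          proof (rule sum.neutral, intro ballI)
            fix t assume "t \<in> {..<r}"
            then have t: "t < r" by simp
            have "dotn n (pf t) g = (\<Sum>j<n - r. vec_index zv j * dotn n (pf t) (?q (r + j)))"
              unfolding g_def[abs_def] by (rule dotn_sum_right)
            also have "\<dots> = 0" using F(4)[OF t] by (intro sum.neutral) auto
            finally show "dotn n (pf t) g * pf t i = 0" by simp
          qed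
          have "(\<Sum>t<n. dotn n (pf t) g * pf t i) = (\<Sum>m<n - r. dotn n (pf (r + m)) g * pf (r + m) i)"
            using sum_split_at[OF rn] z sum_shift_r[OF rn] by simp
          then show ?thesis by (simp add: mult.commute)
        qed
        also have "\<dots> = g i" by (rule orthonormal_expand[OF F(2) i, symmetric])
        finally show "(?A *\<^sub>v yv) $ i = v $ i" using vg[OF i] by simp
      qed
      then show "v \<in> col_space ?A" unfolding col_space_def using yv A by auto
    qed
  qed
qed

end

context thm45
begin

lemma low_eig_diag:
  assumes t: "t < r" and ltp: "lt t > 0" and v: "\<And>c. c \<le> r - 1 \<Longrightarrow> dotn n v (xp c) = 0"
  shows "((\<lambda>e. lam t e * Pf t e v v / e ^ (2 * r - 1)) \<longlongrightarrow> 0) (at_right 0)"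
proof -
  have tn: "t < n" using t r_le_n by simp
  have r1: "r - 1 < r" using r_ge1 by simp
  have NN: "2 * (r - 1) + 1 = 2 * r - 1" using r_ge1 by simp
  let ?N = "2 * r - 1"
  let ?N' = "2 * r - 1 - 2 * t"
  have Nsplit: "?N = 2 * t + ?N'" using t by simp
  have "?N' = 2 * (r - t - 1) + 1" using t by simp
  then have oddN': "odd ?N'" by simp
  have eo: "eig_order r t = 2 * t" using t unfolding eig_order_def by simp
  obtain cv where lim: "((\<lambda>e. bf e v v / e ^ ?N) \<longlongrightarrow> cv) (at_right 0)"
    using bf_perp_lim[OF r1 v] unfolding NN by blast
  have evb: "eventually (\<lambda>e. \<bar>bf e v v / e ^ ?N\<bar> \<le> \<bar>cv\<bar> + 1) (at_right 0)"
  proof -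
  have ev1: "eventually (\<lambda>e. dist (bf e v v / e ^ ?N) cv < 1) (at_right 0)"
    by (rule tendstoD[OF lim]) simp
  show ?thesis using ev1
  proof (rule eventually_mono)
    fix e :: real assume "dist (bf e v v / e ^ ?N) cv < 1"
    then have h: "\<bar>bf e v v / e ^ ?N - cv\<bar> < 1" by (simp add: dist_real_def)
    have "\<bar>bf e v v / e ^ ?N\<bar> = \<bar>(bf e v v / e ^ ?N - cv) + cv\<bar>" by simp
    also have "\<dots> \<le> \<bar>bf e v v / e ^ ?N - cv\<bar> + \<bar>cv\<bar>" by (rule abs_triangle_ineq)
    finally show "\<bar>bf e v v / e ^ ?N\<bar> \<le> \<bar>cv\<bar> + 1" using h by simp
  qed
  qed
  define C' where "C' = (\<bar>cv\<bar> + 1) * (2 / lt t)"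
  have evg: "eventually (\<lambda>e. \<bar>Pf t e v v\<bar> \<le> C' * e ^ ?N') (at_right 0)"
    using eventually_conj[OF eventually_conj[OF ev_small lam_lower[OF tn ltp]] evb]
  proof (rule eventually_mono)
    fix e assume h: "((0 < e \<and> e < \<delta> \<and> e \<le> \<epsilon>0) \<and> lt t / 2 * e ^ eig_order r t \<le> lam t e) \<and>
        \<bar>bf e v v / e ^ ?N\<bar> \<le> \<bar>cv\<bar> + 1"
    have ae: "\<bar>e\<bar> < \<delta>" using h by simp
    have lb: "lt t / 2 * e ^ (2 * t) \<le> lam t e" using h eo by simp
    have lbpos: "lt t / 2 * e ^ (2 * t) > 0" using h ltp by simp
    have g0: "0 \<le> Pf t e v v" by (rule Pf_nonneg[OF ae tn])
    have bf0: "0 \<le> bf e v v" using h bf_psd by simp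
    have eN: "e ^ ?N > 0" using h by simp
    have bfb: "bf e v v \<le> (\<bar>cv\<bar> + 1) * e ^ ?N"
    proof -
      have "bf e v v / e ^ ?N \<le> \<bar>cv\<bar> + 1" using h by linarith
      then show ?thesis using eN by (simp add: pos_divide_le_eq)
    qed
    have "lam t e * Pf t e v v \<le> bf e v v" using lam_Pf_le[of e t v] h tn by simp
    then have "Pf t e v v \<le> bf e v v / lam t e" using lb lbpos by (simp add: pos_le_divide_eq mult.commute)
    also have "\<dots> \<le> bf e v v / (lt t / 2 * e ^ (2 * t))"
      using lb lbpos bf0 by (intro divide_left_mono) auto
    also have "\<dots> \<le> (\<bar>cv\<bar> + 1) * e ^ ?N / (lt t / 2 * e ^ (2 * t))"
      using bfb lbpos by (intro divide_right_mono) auto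
    also have "\<dots> = C' * e ^ ?N'"
      unfolding C'_def using h ltp by (subst Nsplit) (simp add: power_add field_simps)
    finally show "\<bar>Pf t e v v\<bar> \<le> C' * e ^ ?N'" using g0 by simp
  qed
  then obtain \<eta> where eta: "\<eta> > 0" and hb: "\<And>e. 0 < e \<Longrightarrow> e < \<eta> \<Longrightarrow> \<bar>Pf t e v v\<bar> \<le> C' * e ^ ?N'"
    unfolding eventually_at_right_field by auto
  have gl: "((\<lambda>e. Pf t e v v / e ^ ?N') \<longlongrightarrow> 0) (at_right 0)"
    by (rule ra_parity[OF Pf_analytic[OF tn] delta_pos _ oddN' eta hb]) (rule Pf_nonneg[OF _ tn])
  have "((\<lambda>e. (lam t e / e ^ (2 * t)) * (Pf t e v v / e ^ ?N')) \<longlongrightarrow> lt t * 0) (at_right 0)"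
    using lam_lim[OF tn] unfolding eo by (intro tendsto_mult gl)
  then have lim0: "((\<lambda>e. (lam t e / e ^ (2 * t)) * (Pf t e v v / e ^ ?N')) \<longlongrightarrow> 0) (at_right 0)" by simp
  have "eventually (\<lambda>e. (lam t e / e ^ (2 * t)) * (Pf t e v v / e ^ ?N') =
      lam t e * Pf t e v v / e ^ ?N) (at_right (0::real))"
    using eventually_at_right_less[of "0::real"]
  proof (rule eventually_mono)
    fix e :: real assume "0 < e"
    then show "(lam t e / e ^ (2 * t)) * (Pf t e v v / e ^ ?N') = lam t e * Pf t e v v / e ^ ?N"
      by (subst Nsplit) (simp add: power_add field_simps)
  qed
  then show ?thesis by (rule Lim_transform_eventually[OF lim0])
qed

lemma low_eig_vanish:
  assumes t: "t < r" and ltp: "lt t > 0"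
    and u: "\<And>c. c \<le> r - 1 \<Longrightarrow> dotn n u (xp c) = 0"
    and w: "\<And>c. c \<le> r - 1 \<Longrightarrow> dotn n w (xp c) = 0"
  shows "((\<lambda>e. lam t e * Pf t e u w / e ^ (2 * r - 1)) \<longlongrightarrow> 0) (at_right 0)"
proof -
  have tn: "t < n" using t r_le_n by simp
  let ?N = "2 * r - 1"
  have lu: "((\<lambda>e. lam t e * Pf t e u u / e ^ ?N) \<longlongrightarrow> 0) (at_right 0)" by (rule low_eig_diag[OF t ltp u])
  have lw: "((\<lambda>e. lam t e * Pf t e w w / e ^ ?N) \<longlongrightarrow> 0) (at_right 0)" by (rule low_eig_diag[OF t ltp w])
  have s0: "((\<lambda>e. (lam t e * Pf t e u u / e ^ ?N + lam t e * Pf t e w w / e ^ ?N) / 2) \<longlongrightarrow> 0) (at_right 0)"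
    by (intro tendsto_divide_zero tendsto_add_zero lu lw)
  show ?thesis
  proof (rule tendsto_0_le[OF s0, where K=1])
    show "eventually (\<lambda>e. norm (lam t e * Pf t e u w / e ^ ?N) \<le>
        norm ((lam t e * Pf t e u u / e ^ ?N + lam t e * Pf t e w w / e ^ ?N) / 2) * 1) (at_right 0)"
      using ev_small
    proof (rule eventually_mono)
      fix e assume h: "0 < e \<and> e < \<delta> \<and> e \<le> \<epsilon>0"
      have ae: "\<bar>e\<bar> < \<delta>" using h by simp
      have l0: "lam t e \<ge> 0" using lam_nonneg[of e t] h tn by simp
      have eN: "e ^ ?N > 0" using h by simp
      have c: "\<bar>Pf t e u w\<bar> \<le> (Pf t e u u + Pf t e w w) / 2" by (rule Pf_cross[OF ae tn])
      have "\<bar>lam t e * Pf t e u w / e ^ ?N\<bar> = lam t e * \<bar>Pf t e u w\<bar> / e ^ ?N"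
        using l0 eN by (simp add: abs_mult abs_divide)
      also have "\<dots> \<le> lam t e * ((Pf t e u u + Pf t e w w) / 2) / e ^ ?N"
        using l0 eN c by (intro divide_right_mono mult_left_mono) auto
      also have "\<dots> = (lam t e * Pf t e u u / e ^ ?N + lam t e * Pf t e w w / e ^ ?N) / 2"
      proof -
        have eN0: "e \<noteq> 0" using h by simp
        show ?thesis using eN0 by (simp add: add_divide_distrib diff_divide_distrib ring_distribs)
      qed
      also have "\<dots> \<le> \<bar>(lam t e * Pf t e u u / e ^ ?N + lam t e * Pf t e w w / e ^ ?N) / 2\<bar>" by (rule abs_ge_self)
      finally show "norm (lam t e * Pf t e u w / e ^ ?N) \<le>
        norm ((lam t e * Pf t e u u / e ^ ?N + lam t e * Pf t e w w / e ^ ?N) / 2) * 1" by simp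
    qed
  qed
qed

end

lemma gram_mat_eq:
  fixes M :: "nat \<Rightarrow> nat \<Rightarrow> 'a::comm_ring_1"
  shows "Matrix.mat s s (\<lambda>(a,b). \<Sum>t<s. M a t * d t * M b t) =
    Matrix.mat s s (\<lambda>(a,t). M a t) * Matrix.mat s s (\<lambda>(i,j). if i = j then d i else 0) * transpose_mat (Matrix.mat s s (\<lambda>(a,t). M a t))"
  (is "_ = ?M * ?D * transpose_mat ?M")
proof (rule eq_matI)
  fix i j assume ij: "i < dim_row (?M * ?D * transpose_mat ?M)" "j < dim_col (?M * ?D * transpose_mat ?M)"
  then have i: "i < s" and j: "j < s" by auto
  have "(?M * ?D * transpose_mat ?M) $$ (i,j) = (\<Sum>k<s. (\<Sum>t<s. M i t * (if t = k then d t else 0)) * M j k)"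
    using i j by (simp add: scalar_prod_def atLeast0LessThan)
  also have "\<dots> = (\<Sum>k<s. M i k * d k * M j k)"
    by (rule sum.cong) (auto simp: if_distrib sum.delta cong: if_cong)
  finally show "Matrix.mat s s (\<lambda>(a,b). \<Sum>t<s. M a t * d t * M b t) $$ (i,j) = (?M * ?D * transpose_mat ?M) $$ (i,j)"
    using i j by simp
qed auto

context thm45
begin

lemma part3_entry:
  assumes inj: "inj_on x {..<n}" and dW: "det (Wron f (r - 1)) \<noteq> 0"
    and qr: "full_QR (Vand n x (r - 1)) Q" and i: "i < n - r" and j: "j < n - r"
  shows "tcoef f (2 * r - 1) * Sabs (2 * r - 1) (\<lambda>a. Q $$ (a, r + i)) (\<lambda>a. Q $$ (a, r + j)) =
    (\<Sum>k<n - r. dotn n (\<lambda>a. Q $$ (a, r + i)) (pf (r + k)) * lt (r + k) * dotn n (\<lambda>a. Q $$ (a, r + j)) (pf (r + k)))"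
proof -
  note F = rset_facts[OF inj dW qr]
  have r1: "1 \<le> r" by (rule r_ge1)
  have rn: "r \<le> n" by (rule r_le_n)
  have sp: "spanx n x r (\<lambda>k a. Q $$ (a,k))" by (rule qr_facts(3)[OF qr r1 rn])
  let ?q = "\<lambda>k a. Q $$ (a,k)"
  let ?u = "?q (r + i)" and ?w = "?q (r + j)"
  let ?N = "2 * r - 1"
  have perp: "dotn n (?q (r + i')) (xp c) = 0" if i': "i' < n - r" and c: "c \<le> r - 1" for i' c
  proof -
    have cr: "c < r" using c r1 by simp
    have "dotn n (?q (r + i')) (xp c) = (\<Sum>k\<le>c. dotn n (?q k) (\<lambda>a. x a ^ c) * dotn n (?q (r + i')) (?q k))"
      unfolding xp_def by (rule onz_spanx_expand[OF sp cr])
    also have "\<dots> = 0"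
    proof (rule sum.neutral, intro ballI)
      fix k assume "k \<in> {..c}"
      then have "k < n" "k \<noteq> r + i'" "r + i' < n" using cr i' rn by auto
      then show "dotn n (?q k) (\<lambda>a. x a ^ c) * dotn n (?q (r + i')) (?q k) = 0" using F(1) by simp
    qed
    finally show ?thesis .
  qed
  have lim1: "((\<lambda>e. bf e ?u ?w / e ^ ?N) \<longlongrightarrow> tcoef f ?N * Sabs ?N ?u ?w) (at_right 0)"
  proof (rule bf_lead)
    show "?N < 2 * r" using r1 by simp
    fix m assume m: "m < ?N"
    show "tcoef f m * Sabs m ?u ?w = 0"
    proof (rule low_terms_zero)
      show "m \<le> 2 * r - 2" using m by simp
      fix a assume "a \<le> m"
      then have "a \<le> r - 1 \<or> m - a \<le> r - 1" using m by linarith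
      then show "dotn n ?u (xp a) = 0 \<or> dotn n ?w (xp (m - a)) = 0" using perp i j by blast
    qed
  qed
  let ?L = "(\<Sum>t\<in>{r..<n}. lt t * (dotn n ?u (pf t) * dotn n ?w (pf t)))"
  have lim2: "((\<lambda>e. (\<Sum>t<r. lam t e * Pf t e ?u ?w / e ^ ?N) + (\<Sum>t\<in>{r..<n}. (lam t e / e ^ ?N) * Pf t e ?u ?w))
      \<longlongrightarrow> 0 + ?L) (at_right 0)"
  proof (rule tendsto_add)
    have "((\<lambda>e. \<Sum>t<r. lam t e * Pf t e ?u ?w / e ^ ?N) \<longlongrightarrow> (\<Sum>t<r. 0)) (at_right 0)"
    proof (rule tendsto_sum)
      fix t assume "t \<in> {..<r}"
      then have t: "t < r" by simp
      show "((\<lambda>e. lam t e * Pf t e ?u ?w / e ^ ?N) \<longlongrightarrow> 0) (at_right 0)"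
        by (rule low_eig_vanish[OF t lt_pos_all[OF inj r1 order_refl dW t]]) (use perp i j in auto)
    qed
    then show "((\<lambda>e. \<Sum>t<r. lam t e * Pf t e ?u ?w / e ^ ?N) \<longlongrightarrow> 0) (at_right 0)" by simp
    show "((\<lambda>e. \<Sum>t\<in>{r..<n}. (lam t e / e ^ ?N) * Pf t e ?u ?w) \<longlongrightarrow> ?L) (at_right 0)"
    proof (rule tendsto_sum, rule tendsto_mult)
      fix t assume "t \<in> {r..<n}"
      then have t: "r \<le> t" "t < n" by auto
      have "eig_order r t = ?N" using t unfolding eig_order_def by simp
      then show "((\<lambda>e. lam t e / e ^ ?N) \<longlongrightarrow> lt t) (at_right 0)" using lam_lim[OF t(2)] by simp
      show "((\<lambda>e. Pf t e ?u ?w) \<longlongrightarrow> dotn n ?u (pf t) * dotn n ?w (pf t)) (at_right 0)"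
        by (rule Pf_lim_right[OF t(2)])
    qed
  qed
  have ev: "eventually (\<lambda>e. (\<Sum>t<r. lam t e * Pf t e ?u ?w / e ^ ?N) + (\<Sum>t\<in>{r..<n}. (lam t e / e ^ ?N) * Pf t e ?u ?w)
      = bf e ?u ?w / e ^ ?N) (at_right 0)"
    using ev_small
  proof (rule eventually_mono)
    fix e assume "0 < e \<and> e < \<delta> \<and> e \<le> \<epsilon>0"
    then have ae: "\<bar>e\<bar> < \<delta>" by simp
    have "bf e ?u ?w / e ^ ?N = (\<Sum>t<n. lam t e * Pf t e ?u ?w / e ^ ?N)"
      unfolding bf_decomp[OF ae] by (simp add: sum_divide_distrib)
    also have "\<dots> = (\<Sum>t<r. lam t e * Pf t e ?u ?w / e ^ ?N) + (\<Sum>t\<in>{r..<n}. lam t e * Pf t e ?u ?w / e ^ ?N)"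
      by (rule sum_split_at[OF rn])
    finally show "(\<Sum>t<r. lam t e * Pf t e ?u ?w / e ^ ?N) + (\<Sum>t\<in>{r..<n}. (lam t e / e ^ ?N) * Pf t e ?u ?w)
      = bf e ?u ?w / e ^ ?N" by simp
  qed
  have lim3: "((\<lambda>e. bf e ?u ?w / e ^ ?N) \<longlongrightarrow> 0 + ?L) (at_right 0)"
    by (rule Lim_transform_eventually[OF lim2 ev])
  have "tcoef f ?N * Sabs ?N ?u ?w = 0 + ?L"
    using tendsto_unique[OF trivial_limit_at_right_real lim1 lim3] .
  also have "\<dots> = (\<Sum>k<n - r. lt (r + k) * (dotn n ?u (pf (r + k)) * dotn n ?w (pf (r + k))))"
    using sum_shift_r[OF rn] by simp
  finally show ?thesis by (simp add: ac_simps)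
qed

end

context thm45
begin

lemma part3:
  assumes inj: "inj_on x {..<n}" and dW: "det (Wron f (r - 1)) \<noteq> 0"
    and qr: "full_QR (Vand n x (r - 1)) Q"
  shows "char_poly (tcoef f (2*r-1) \<cdot>\<^sub>m
              (transpose_mat (last_cols r Q) * Dpow n x (2*r-1) * last_cols r Q))
           = (\<Prod>s\<in>{r..<n}. [:- lt s, 1:])"
proof -
  note F = rset_facts[OF inj dW qr]
  have Q: "Q \<in> carrier_mat n n" by (rule F(5))
  have rn: "r \<le> n" by (rule r_le_n)
  let ?m = "n - r"
  let ?N = "2 * r - 1"
  let ?Qp = "last_cols r Q"
  let ?Mx = "tcoef f ?N \<cdot>\<^sub>m (transpose_mat ?Qp * Dpow n x ?N * ?Qp)"
  let ?q = "\<lambda>k a. Q $$ (a,k)"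
  define Gm where "Gm i k = dotn n (?q (r + i)) (pf (r + k))" for i k
  let ?G = "Matrix.mat ?m ?m (\<lambda>(i,k). Gm i k)"
  let ?D = "Matrix.mat ?m ?m (\<lambda>(i,j). if i = j then lt (r + i) else (0::real))"
  have Qp: "?Qp \<in> carrier_mat n ?m" using Q by (simp add: last_cols_def)
  have Qpi: "?Qp $$ (a,i) = Q $$ (a, r + i)" if "a < n" "i < ?m" for a i
    using that Q by (simp add: last_cols_def)
  have Tq: "transpose_mat ?Qp \<in> carrier_mat ?m n" using Qp by simp
  have Dc: "Dpow n x ?N \<in> carrier_mat n n" by (simp add: Dpow_def)
  have Mx: "?Mx \<in> carrier_mat ?m ?m"
    using mult_carrier_mat[OF mult_carrier_mat[OF Tq Dc] Qp] by simp
  have Mxe: "?Mx = Matrix.mat ?m ?m (\<lambda>(i,j). \<Sum>k<?m. Gm i k * lt (r + k) * Gm j k)"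
  proof (rule eq_matI)
    fix i j assume "i < dim_row (Matrix.mat ?m ?m (\<lambda>(i,j). \<Sum>k<?m. Gm i k * lt (r + k) * Gm j k))"
      "j < dim_col (Matrix.mat ?m ?m (\<lambda>(i,j). \<Sum>k<?m. Gm i k * lt (r + k) * Gm j k))"
    then have i: "i < ?m" and j: "j < ?m" by auto
    have "(transpose_mat ?Qp * Dpow n x ?N * ?Qp) $$ (i,j) =
        (\<Sum>a<n. (\<Sum>bb<n. ?Qp $$ (bb,i) * \<bar>x bb - x a\<bar> ^ ?N) * ?Qp $$ (a,j))"
      using i j Qp by (simp add: scalar_prod_def Dpow_def atLeast0LessThan)
    also have "\<dots> = (\<Sum>a<n. \<Sum>bb<n. Q $$ (bb, r + i) * Q $$ (a, r + j) * \<bar>x bb - x a\<bar> ^ ?N)"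
      using i j by (simp add: Qpi sum_distrib_right sum_distrib_left ac_simps)
    also have "\<dots> = (\<Sum>bb<n. \<Sum>a<n. Q $$ (bb, r + i) * Q $$ (a, r + j) * \<bar>x bb - x a\<bar> ^ ?N)"
      by (rule sum.swap)
    also have "\<dots> = Sabs ?N (?q (r + i)) (?q (r + j))" unfolding Sabs_def ..
    finally have e1: "(transpose_mat ?Qp * Dpow n x ?N * ?Qp) $$ (i,j) = Sabs ?N (?q (r + i)) (?q (r + j))" .
    have "?Mx $$ (i,j) = tcoef f ?N * Sabs ?N (?q (r + i)) (?q (r + j))"
      using i j Qp e1 by (simp add: Dpow_def)
    also have "\<dots> = (\<Sum>k<?m. Gm i k * lt (r + k) * Gm j k)"
      unfolding Gm_def by (rule part3_entry[OF inj dW qr i j])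
    finally show "?Mx $$ (i,j) = Matrix.mat ?m ?m (\<lambda>(i,j). \<Sum>k<?m. Gm i k * lt (r + k) * Gm j k) $$ (i,j)"
      using i j by simp
  qed (use Mx in auto)
  have Mx2: "?Mx = ?G * ?D * transpose_mat ?G"
    unfolding Mxe by (rule gram_mat_eq)
  have GtG: "transpose_mat ?G * ?G = 1\<^sub>m ?m"
  proof (rule eq_matI)
    fix k l assume "k < dim_row (1\<^sub>m ?m :: real mat)" "l < dim_col (1\<^sub>m ?m :: real mat)"
    then have k: "k < ?m" and l: "l < ?m" by auto
    have "(transpose_mat ?G * ?G) $$ (k,l) = (\<Sum>i<?m. Gm i k * Gm i l)"
      using k l by (simp add: scalar_prod_def atLeast0LessThan)
    also have "\<dots> = (\<Sum>a<n. dotn n (?q a) (pf (r + k)) * dotn n (?q a) (pf (r + l)))"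
    proof -
      have z: "(\<Sum>a<r. dotn n (?q a) (pf (r + k)) * dotn n (?q a) (pf (r + l))) = 0"
        by (rule sum.neutral) (use F(3) k in auto)
      show ?thesis
        unfolding Gm_def using sum_split_at[OF rn, of "\<lambda>a. dotn n (?q a) (pf (r + k)) * dotn n (?q a) (pf (r + l))"]
          z sum_shift_r[OF rn, of "\<lambda>a. dotn n (?q a) (pf (r + k)) * dotn n (?q a) (pf (r + l))"] by simp
    qed
    also have "\<dots> = dotn n (pf (r + k)) (pf (r + l))"
    proof -
      have "dotn n (pf (r + k)) (pf (r + l)) = dotn n (pf (r + k)) (\<lambda>i. \<Sum>a<n. dotn n (?q a) (pf (r + l)) * ?q a i)"
        by (rule dotn_cong) (use orthonormal_expand[OF F(1)] in auto)
      also have "\<dots> = (\<Sum>a<n. dotn n (?q a) (pf (r + l)) * dotn n (pf (r + k)) (?q a))" by (rule dotn_sum_right)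
      finally show ?thesis by (simp add: dotn_comm mult.commute)
    qed
    also have "\<dots> = (if k = l then 1 else 0)" using F(2)[of "r + k" "r + l"] k l rn by simp
    finally show "(transpose_mat ?G * ?G) $$ (k,l) = 1\<^sub>m ?m $$ (k,l)" using k l by simp
  qed auto
  have G: "?G \<in> carrier_mat ?m ?m" "transpose_mat ?G \<in> carrier_mat ?m ?m" by auto
  have GGt: "?G * transpose_mat ?G = 1\<^sub>m ?m" by (rule mat_mult_left_right_inverse[OF G(2) G(1) GtG])
  have D: "?D \<in> carrier_mat ?m ?m" by simp
  have sim: "similar_mat ?Mx ?D"
    unfolding similar_mat_def
    by (rule exI, rule exI, rule similar_mat_witI[OF GGt GtG Mx2 Mx D G(1) G(2)])
  have "char_poly ?Mx = char_poly ?D" by (rule char_poly_similar[OF sim])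
  also have "char_poly ?D = prod_list (map (\<lambda>a. [:- a, 1:]) (diag_mat ?D))"
    by (rule char_poly_upper_triangular[OF D]) (auto simp: upper_triangular_def)
  also have "\<dots> = (\<Prod>k<?m. [:- lt (r + k), 1:])"
  proof -
    have "map (\<lambda>a. [:- a, 1:]) (diag_mat ?D) = map (\<lambda>k. [:- lt (r + k), 1:]) [0..<?m]"
      by (simp add: diag_mat_def)
    then show ?thesis
      by (simp add: prod.distinct_set_conv_list[symmetric] atLeast0LessThan)
  qed
  also have "\<dots> = (\<Prod>s\<in>{r..<n}. [:- lt s, 1:])"
  proof -
    have "(\<Prod>s\<in>{0 + r..<?m + r}. [:- lt s, 1:]) = (\<Prod>k\<in>{0..<?m}. [:- lt (k + r), 1:])"
      by (rule prod.shift_bounds_nat_ivl)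
    then show ?thesis using rn by (simp add: atLeast0LessThan add.commute)
  qed
  finally show ?thesis .
qed

end

theorem theorem4p5:
  fixes f :: "real \<Rightarrow> real" and b :: real and r n :: nat and x :: "nat \<Rightarrow> real"
    and \<epsilon>0 \<delta> :: real
    and lam :: "nat \<Rightarrow> real \<Rightarrow> real" and P :: "nat \<Rightarrow> real \<Rightarrow> real mat"
    and p :: "nat \<Rightarrow> real Matrix.vec" and lt :: "nat \<Rightarrow> real"
  assumes b_pos: "b > 0" and r_ge1: "r \<ge> 1"
    and f_smooth: "C_k_on (2*r) f {-b<..<b}"
    and f_odd0: "\<And>l. 1 \<le> l \<Longrightarrow> l < r \<Longrightarrow> (deriv ^^ (2*l - 1)) f 0 = 0"
    and f_odd_r: "(deriv ^^ (2*r - 1)) f 0 \<noteq> 0"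
    and r_le_n: "r \<le> n"
    and eps0_pos: "\<epsilon>0 > 0"
    and K_psd: "\<And>\<epsilon>. 0 \<le> \<epsilon> \<Longrightarrow> \<epsilon> \<le> \<epsilon>0 \<Longrightarrow> psd_mat n (Kmat f n x \<epsilon>)"
    and K_analytic: "mat_analytic_near0 n (Kmat f n x)"
    \<comment> \<open>analytic eigen-decomposition K_eps = sum_k lam_k(eps) P_k(eps) near 0\<close>
    and delta_pos: "\<delta> > 0"
    and lam_analytic: "\<And>k. k < n \<Longrightarrow> real_analytic_near0 (lam k)"
    and P_analytic: "\<And>k. k < n \<Longrightarrow> mat_analytic_near0 n (P k)"
    and P_rank1: "\<And>\<epsilon> k. \<bar>\<epsilon>\<bar> < \<delta> \<Longrightarrow> k < n \<Longrightarrow>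
                    \<exists>v\<in>carrier_vec n. scalar_prod v v = 1 \<and> P k \<epsilon> = outer n v"
    and P_orth: "\<And>\<epsilon> k j. \<bar>\<epsilon>\<bar> < \<delta> \<Longrightarrow> k < n \<Longrightarrow> j < n \<Longrightarrow> k \<noteq> j \<Longrightarrow>
                    P k \<epsilon> * P j \<epsilon> = 0\<^sub>m n n"
    and K_decomp: "\<And>\<epsilon> i j. \<bar>\<epsilon>\<bar> < \<delta> \<Longrightarrow> i < n \<Longrightarrow> j < n \<Longrightarrow>
                    Kmat f n x \<epsilon> $$ (i,j) = (\<Sum>k<n. lam k \<epsilon> * P k \<epsilon> $$ (i,j))"
    and lam_sorted: "\<And>\<epsilon> k. 0 < \<epsilon> \<Longrightarrow> \<epsilon> < \<delta> \<Longrightarrow> Suc k < n \<Longrightarrow> lam (Suc k) \<epsilon> \<le> lam k \<epsilon>"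
    \<comment> \<open>limiting eigenvectors\<close>
    and p_unit: "\<And>k. k < n \<Longrightarrow> p k \<in> carrier_vec n \<and> scalar_prod (p k) (p k) = 1"
    and p_limit: "\<And>k. k < n \<Longrightarrow> P k 0 = outer n (p k)"
    \<comment> \<open>lam_s(eps) = eps^(e_s) (lt_s + O(eps)) as eps -> 0+, 0-based s\<close>
    and lam_asymp: "\<And>s. s < n \<Longrightarrow> \<exists>C \<eta>. \<eta> > 0 \<and> (\<forall>\<epsilon>. 0 < \<epsilon> \<and> \<epsilon> < \<eta> \<longrightarrow>
          \<bar>lam s \<epsilon> - \<epsilon> ^ eig_order r s * lt s\<bar>
            \<le> C * \<epsilon> ^ (eig_order r s + 1))"
  shows
    "(\<forall>s. 1 \<le> s \<and> s \<le> r \<longrightarrow>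
        (\<Prod>t<s. lt t) = det (transpose_mat (Vand n x (s-1)) * Vand n x (s-1)) * det (Wron f (s-1)))
   \<and> (\<forall>s. 1 < s \<and> s \<le> r \<and> det (Wron f (s-2)) \<noteq> 0 \<longrightarrow>
        lt (s-1) = det (transpose_mat (Vand n x (s-1)) * Vand n x (s-1))
                     / det (transpose_mat (Vand n x (s-2)) * Vand n x (s-2))
                   * (det (Wron f (s-1)) / det (Wron f (s-2))))
   \<and> (inj_on x {..<n} \<longrightarrow>
        (\<forall>s. 1 \<le> s \<and> s \<le> r \<and> det (Wron f (s-1)) \<noteq> 0 \<longrightarrow>
           (\<forall>Q. full_QR (Vand n x (s-1)) Q \<longrightarrow>
              (\<forall>k<s. p k = col Q k \<or> p k = - col Q k)))
      \<and> (det (Wron f (r-1)) \<noteq> 0 \<longrightarrow>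
           (\<forall>Q. full_QR (Vand n x (r-1)) Q \<longrightarrow>
              col_space (mat_of_cols n (map p [r..<n])) = col_space (last_cols r Q))))
   \<and> (det (Wron f (r-1)) \<noteq> 0 \<and> inj_on x {..<n} \<longrightarrow>
        (\<forall>Q. full_QR (Vand n x (r-1)) Q \<longrightarrow>
           char_poly (tcoef f (2*r-1) \<cdot>\<^sub>m
              (transpose_mat (last_cols r Q) * Dpow n x (2*r-1) * last_cols r Q))
           = (\<Prod>s\<in>{r..<n}. [:- lt s, 1:])))"
proof -
  interpret thm45 f b r n x \<epsilon>0 \<delta> lam P p lt
    by (rule thm45.intro) (fact b_pos r_ge1 f_smooth f_odd0 f_odd_r r_le_n eps0_pos K_psd K_analytic
       delta_pos lam_analytic P_analytic P_rank1 P_orth K_decomp lam_sorted p_unit p_limit lam_asymp)+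
  show ?thesis
  proof (intro conjI allI impI)
    fix s assume "1 \<le> s \<and> s \<le> r"
    then show "(\<Prod>t<s. lt t) = det (transpose_mat (Vand n x (s-1)) * Vand n x (s-1)) * det (Wron f (s-1))"
      using part1 by blast
  next
    fix s assume h: "1 < s \<and> s \<le> r \<and> det (Wron f (s-2)) \<noteq> 0"
    show "lt (s-1) = det (transpose_mat (Vand n x (s-1)) * Vand n x (s-1))
                     / det (transpose_mat (Vand n x (s-2)) * Vand n x (s-2))
                   * (det (Wron f (s-1)) / det (Wron f (s-2)))"
      using part1b h by blast
  next
    fix s Q k assume inj: "inj_on x {..<n}" and h: "1 \<le> s \<and> s \<le> r \<and> det (Wron f (s-1)) \<noteq> 0"
      and qr: "full_QR (Vand n x (s-1)) Q" and k: "k < s"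
    show "p k = col Q k \<or> p k = - col Q k"
      using part2[OF inj _ _ _ qr k] h by blast
  next
    fix Q assume inj: "inj_on x {..<n}" and dW: "det (Wron f (r-1)) \<noteq> 0"
      and qr: "full_QR (Vand n x (r-1)) Q"
    show "col_space (mat_of_cols n (map p [r..<n])) = col_space (last_cols r Q)"
      by (rule part2b[OF inj dW qr])
  next
    fix Q assume h: "det (Wron f (r-1)) \<noteq> 0 \<and> inj_on x {..<n}"
      and qr: "full_QR (Vand n x (r-1)) Q"
    show "char_poly (tcoef f (2*r-1) \<cdot>\<^sub>m
              (transpose_mat (last_cols r Q) * Dpow n x (2*r-1) * last_cols r Q))
           = (\<Prod>s\<in>{r..<n}. [:- lt s, 1:])"
      using part3 h qr by blast
  qed
qed

end
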